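(* Fix $n\in2\mathbb Z_{\ge1}$. For any $c\in\mathbb C$ and complex $\boldsymbol a=(a_1,\dots,a_k)$ with $|a_ia_j|<1$ for all $1\le i<j\le k$ and $|a_ic|<1$ for all $1\le i\le k$, and for all $\kappa\in\mathsf{Sign}_n$, $$\sum_{\lambda\in\mathsf{Sign}_n}\tau_\lambda(c)s_{\kappa/\lambda}(\boldsymbol a)=\sum_{\pi\in\mathsf{Sign}_n}\tau_\pi(c)s_{\pi/\kappa}(\boldsymbol a),$$ with both sums finite (absolutely convergent).
   Context: $\mathsf{Sign}_n$ is the set of signatures $\lambda=(\lambda_1\ge\dots\ge\lambda_n)$, $\lambda_i\in\mathbb Z$. $\mu\preceq\lambda$ means $\lambda_1\ge\mu_1\ge\lambda_2\ge\mu_2\ge\dots\ge\lambda_n\ge\mu_n$; $|\lambda/\mu|=\sum_i(\lambda_i-\mu_i)$; $s_{\lambda/\mu}(a)=\mathbf 1_{\mu\preceq\lambda}a^{|\lambda/\mu|}$ and $s_{\lambda/\mu}(a_1,\dots,a_k)=\sum_{\nu\in\mathsf{Sign}_n}s_{\lambda/\nu}(a_1,\dots,a_{k-1})s_{\nu/\mu}(a_k)$. For $\lambda\in\mathsf{Sign}_n$, $\tau_\lambda(c)=c^{\sum_{j=1}^n(-1)^{j-1}\lambda_j}=c^{\lambda_1-\lambda_2+\lambda_3-\dots}$. *)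

theory Defs
  imports "HOL-Analysis.Analysis"
begin

text \<open>Signatures of length n, represented as integer lists (index 0 = lambda_1).\<close>
definition Sign :: "nat \<Rightarrow> int list set" where
  "Sign n = {l. length l = n \<and> (\<forall>i. Suc i < n \<longrightarrow> l ! i \<ge> l ! Suc i)}"

definition interlace :: "int list \<Rightarrow> int list \<Rightarrow> bool" where
  "interlace mu lam \<longleftrightarrow> length mu = length lam \<and>
     (\<forall>i < length lam. lam ! i \<ge> mu ! i) \<and>
     (\<forall>i. Suc i < length lam \<longrightarrow> mu ! i \<ge> lam ! Suc i)"

definition skew_size :: "int list \<Rightarrow> int list \<Rightarrow> int" where
  "skew_size lam mu = (\<Sum>i<length lam. lam ! i - mu ! i)"

definition skew1 :: "int list \<Rightarrow> int list \<Rightarrow> complex \<Rightarrow> complex" where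
  "skew1 lam mu a = (if interlace mu lam then a ^ nat (skew_size lam mu) else 0)"

text \<open>skew_rev n lam mu [a_k, ..., a_1] = s_{lam/mu}(a_1,...,a_k), by the recursion
  s_{lam/mu}(a_1..a_k) = sum over nu in Sign_n of s_{lam/nu}(a_1..a_{k-1}) s_{nu/mu}(a_k);
  with no variables it is the indicator of lam = mu.\<close>
fun skew_rev :: "nat \<Rightarrow> int list \<Rightarrow> int list \<Rightarrow> complex list \<Rightarrow> complex" where
  "skew_rev n lam mu [] = (if lam = mu then 1 else 0)"
| "skew_rev n lam mu (x # xs) = (\<Sum>\<^sub>\<infinity> nu \<in> Sign n. skew_rev n lam nu xs * skew1 nu mu x)"

definition skew :: "nat \<Rightarrow> int list \<Rightarrow> int list \<Rightarrow> complex list \<Rightarrow> complex" where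
  "skew n lam mu as = skew_rev n lam mu (rev as)"

definition tau :: "int list \<Rightarrow> complex \<Rightarrow> complex" where
  "tau lam c = c powi (\<Sum>j<length lam. (-1) ^ j * lam ! j)"

end

theory Submission
  imports Defs
begin


definition alt :: "int list \<Rightarrow> int" where
  "alt l = (\<Sum>j<length l. (-1) ^ j * l ! j)"

definition taur :: "int list \<Rightarrow> real \<Rightarrow> real" where
  "taur l B = B powi alt l"

definition sk1r :: "int list \<Rightarrow> int list \<Rightarrow> real \<Rightarrow> real" where
  "sk1r lam mu r = (if interlace mu lam then r ^ nat (skew_size lam mu) else 0)"

lemma tau_alt: "tau l c = c powi alt l"
  by (simp add: tau_def alt_def)

lemma pair_sum: "(\<Sum>i<2*k. f i) = (\<Sum>m<k. f (2*m) + f (2*m+1))"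
  for f :: "nat \<Rightarrow> 'a::comm_monoid_add"
proof (induction k)
  case 0 then show ?case by simp
next
  case (Suc k)
  have "{..<2 * Suc k} = insert (Suc (2*k)) (insert (2*k) {..<2*k})" by auto
  then show ?case using Suc by (simp add: ac_simps)
qed

lemma alt_pairs: "length l = 2*k \<Longrightarrow> alt l = (\<Sum>m<k. l!(2*m) - l!(2*m+1))"
  unfolding alt_def by (simp add: pair_sum)

lemma Sign_iff: "l \<in> Sign n \<longleftrightarrow> length l = n \<and> (\<forall>i. Suc i < n \<longrightarrow> l ! Suc i \<le> l ! i)"
  by (simp add: Sign_def)

lemma Sign_mono: assumes "l \<in> Sign n" "i \<le> j" "j < n" shows "l ! j \<le> l ! i"
  using assms(2,3)
proof (induction j)
  case 0 then show ?case by simp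
next
  case (Suc j)
  show ?case
  proof (cases "i = Suc j")
    case True then show ?thesis by simp
  next
    case False
    then have "l ! j \<le> l ! i" using Suc by auto
    moreover have "l ! Suc j \<le> l ! j" using assms(1) Suc.prems by (auto simp: Sign_iff)
    ultimately show ?thesis by simp
  qed
qed

lemma alt_nonneg: assumes "l \<in> Sign (2*k)" shows "alt l \<ge> 0"
proof -
  have len: "length l = 2*k" using assms by (simp add: Sign_iff)
  have "\<forall>m<k. l!(2*m+1) \<le> l!(2*m)" using assms by (auto simp: Sign_iff)
  then show ?thesis unfolding alt_pairs[OF len] by (intro sum_nonneg) auto
qed

lemma skew_size_eq: "length lam = n \<Longrightarrow> skew_size lam mu = (\<Sum>i<n. lam!i - mu!i)"
  by (simp add: skew_size_def)

lemma interlace_iff: "interlace mu lam \<longleftrightarrow> length mu = length lam \<and>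
     (\<forall>i < length lam. mu ! i \<le> lam ! i) \<and> (\<forall>i. Suc i < length lam \<longrightarrow> lam ! Suc i \<le> mu ! i)"
  by (simp add: interlace_def)

lemma norm_skew1: "norm (skew1 lam mu a) = sk1r lam mu (norm a)"
  by (simp add: skew1_def sk1r_def norm_power)

lemma norm_tau: "norm (tau l c) = taur l (norm c)"
  by (simp add: tau_alt taur_def norm_power_int)

lemma sk1r_nonneg: "r \<ge> 0 \<Longrightarrow> sk1r lam mu r \<ge> 0"
  by (simp add: sk1r_def)

lemma sk1r_mono: "0 \<le> r \<Longrightarrow> r \<le> r' \<Longrightarrow> sk1r lam mu r \<le> sk1r lam mu r'"
  by (simp add: sk1r_def power_mono)

lemma taur_mono: assumes "l \<in> Sign (2*k)" "0 \<le> B" "B \<le> B'" shows "taur l B \<le> taur l B'"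
proof -
  have "alt l \<ge> 0" using alt_nonneg[OF assms(1)] .
  then show ?thesis using assms(2,3)
    by (simp add: taur_def power_int_def power_mono)
qed

lemma taur_pos: "0 < B \<Longrightarrow> 0 < taur l B"
  by (simp add: taur_def)

lemma taur_nonneg: "l \<in> Sign (2*k) \<Longrightarrow> 0 \<le> B \<Longrightarrow> 0 \<le> taur l B"
  using alt_nonneg[of l k] by (simp add: taur_def power_int_def)



lemma Lq_has_sum:
  fixes q :: real assumes q: "0 \<le> q" "q < 1"
  shows "((\<lambda>ds::nat list. q ^ sum_list ds) has_sum (1/(1-q))^m) {ds. length ds = m}"
proof (induction m)
  case 0
  have "{ds::nat list. length ds = 0} = {[]}" by auto
  moreover have "((\<lambda>ds::nat list. q ^ sum_list ds) has_sum 1) {[]}"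
    by (rule has_sum_finiteI) auto
  ultimately show ?case by simp
next
  case (Suc m)
  define L where "L = {ds::nat list. length ds = m}"
  have img: "{ds::nat list. length ds = Suc m} = (\<lambda>(d,ds). d#ds) ` (UNIV \<times> L)"
    by (auto simp: L_def length_Suc_conv image_iff)
  have inj: "inj_on (\<lambda>(d,ds). d#ds) (UNIV \<times> L)" by (auto simp: inj_on_def)
  have geo: "((\<lambda>d::nat. q^d) has_sum (1/(1-q))) UNIV"
  proof -
    have "(\<lambda>d. q^d) sums (1/(1-q))" using geometric_sums[of q] q by simp
    moreover have "summable (\<lambda>d. norm (q^d))" using q by simp
    ultimately show ?thesis using norm_summable_imp_has_sum by blast
  qed
  let ?c = "(1/(1-q))^m"
  have fib: "((\<lambda>ds. (\<lambda>(d,ds). q^(d + sum_list ds)) (d, ds)) has_sum q^d * ?c) L" for d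
    using has_sum_cmult_right[OF Suc.IH, of "q^d"] by (simp add: power_add L_def)
  have gsum: "((\<lambda>d. q^d * ?c) has_sum (1/(1-q)) * ?c) UNIV"
    by (rule has_sum_cmult_left[OF geo])
  have summ: "(\<lambda>(d,ds). q^(d + sum_list ds)) summable_on Sigma UNIV (\<lambda>_. L)"
    by (rule summable_on_SigmaI[OF fib has_sum_imp_summable[OF gsum]]) (use q in auto)
  have "((\<lambda>(d,ds). q^(d + sum_list ds)) has_sum (1/(1-q)) * ?c) (UNIV \<times> L)"
    by (rule has_sum_SigmaI[OF fib gsum summ])
  then have "((\<lambda>ds. q ^ sum_list ds) has_sum (1/(1-q)) * ?c) ((\<lambda>(d,ds). d#ds) ` (UNIV \<times> L))"
    by (subst has_sum_reindex[OF inj]) (simp add: o_def case_prod_unfold)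
  then show ?case using img by simp
qed

lemma bound_by_Lq:
  fixes f :: "'a \<Rightarrow> real" and h :: "'a \<Rightarrow> nat list"
  assumes q: "0 \<le> q" "q < 1" and inj: "inj_on h T" and len: "\<And>l. l\<in>T \<Longrightarrow> length (h l) = m"
    and K: "0 \<le> K" and fb: "\<And>l. l\<in>T \<Longrightarrow> 0 \<le> f l \<and> f l \<le> K * q ^ sum_list (h l)"
  shows "f summable_on T \<and> infsum f T \<le> K * (1/(1-q))^m"
proof -
  let ?g = "\<lambda>ds::nat list. q ^ sum_list ds"
  let ?L = "{ds::nat list. length ds = m}"
  have hs: "(?g has_sum (1/(1-q))^m) ?L" by (rule Lq_has_sum[OF q])
  have sub: "h ` T \<subseteq> ?L" using len by auto
  have sL: "?g summable_on ?L" using hs by (rule has_sum_imp_summable)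
  have s1: "?g summable_on h ` T" using summable_on_subset_banach[OF sL sub] .
  have s2: "(\<lambda>l. ?g (h l)) summable_on T" using summable_on_reindex[OF inj, of ?g] s1 by (simp add: o_def)
  have e2: "infsum (\<lambda>l. ?g (h l)) T = infsum ?g (h ` T)" using infsum_reindex[OF inj, of ?g] by (simp add: o_def)
  have "infsum ?g (h`T) \<le> infsum ?g ?L" by (rule infsum_mono2[OF s1 sL sub]) (use q in auto)
  also have "infsum ?g ?L = (1/(1-q))^m" using hs by (rule infsumI)
  finally have b2: "infsum (\<lambda>l. ?g (h l)) T \<le> (1/(1-q))^m" using e2 by simp
  have s3: "(\<lambda>l. K * ?g (h l)) summable_on T" using s2 by (rule summable_on_cmult_right)
  have fs: "f summable_on T" by (rule summable_on_comparison_test[OF s3]) (use fb in auto)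
  have "infsum f T \<le> infsum (\<lambda>l. K * ?g (h l)) T" by (rule infsum_mono[OF fs s3]) (use fb in auto)
  also have "\<dots> = K * infsum (\<lambda>l. ?g (h l)) T" by (rule infsum_cmult_right') 
  also have "\<dots> \<le> K * (1/(1-q))^m" using b2 K by (rule mult_left_mono)
  finally show ?thesis using fs by simp
qed

lemma tonelli_real:
  fixes g :: "'a \<Rightarrow> 'b \<Rightarrow> real"
  assumes nn: "\<And>x y. x\<in>A \<Longrightarrow> y\<in>B \<Longrightarrow> 0 \<le> g x y"
    and fib: "\<And>x. x\<in>A \<Longrightarrow> g x summable_on B"
    and out: "(\<lambda>x. infsum (g x) B) summable_on A"
  shows "\<And>y. y \<in> B \<Longrightarrow> (\<lambda>x. g x y) summable_on A"
    and "(\<lambda>y. infsum (\<lambda>x. g x y) A) summable_on B"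
    and "infsum (\<lambda>y. infsum (\<lambda>x. g x y) A) B = infsum (\<lambda>x. infsum (g x) B) A"
proof -
  have j: "(\<lambda>(x,y). g x y) summable_on Sigma A (\<lambda>_. B)"
    by (rule summable_on_SigmaI[where g="\<lambda>x. infsum (g x) B"]) (use fib out nn in auto)
  then have js: "(\<lambda>(y,x). g x y) summable_on B \<times> A"
    using summable_on_swap[of "\<lambda>(x,y). g x y" A B] by (simp add: case_prod_unfold)
  show "(\<lambda>x. g x y) summable_on A" if "y \<in> B" for y
    using summable_on_SigmaD1[of "\<lambda>y x. g x y" B "\<lambda>_. A" y] js that by simp
  show "(\<lambda>y. infsum (\<lambda>x. g x y) A) summable_on B"
    using summable_on_Sigma_banach[of "\<lambda>y x. g x y" B "\<lambda>_. A"] js by simp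
  show "infsum (\<lambda>y. infsum (\<lambda>x. g x y) A) B = infsum (\<lambda>x. infsum (g x) B) A"
    using infsum_swap_banach[of g A B] j by simp
qed

lemma fubini_abs:
  fixes f :: "'a \<Rightarrow> 'b \<Rightarrow> complex"
  assumes fib: "\<And>x. x\<in>A \<Longrightarrow> (\<lambda>y. norm (f x y)) summable_on B"
    and out: "(\<lambda>x. infsum (\<lambda>y. norm (f x y)) B) summable_on A"
  shows "infsum (\<lambda>x. infsum (\<lambda>y. f x y) B) A = infsum (\<lambda>y. infsum (\<lambda>x. f x y) A) B"
proof -
  have o2: "(\<lambda>x. norm (infsum (\<lambda>y. norm (f x y)) B)) summable_on A"
    using out summable_on_iff_abs_summable_on_real[of "\<lambda>x. infsum (\<lambda>y. norm (f x y)) B" A] by simp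
  have H: "(\<lambda>p. norm (f (fst p) (snd p))) summable_on Sigma A (\<lambda>_. B)"
    using Infinite_Sum.abs_summable_on_Sigma_iff[where f="\<lambda>p. f (fst p) (snd p)" and A=A and B="\<lambda>_. B"] fib o2 by simp
  have "(\<lambda>p. f (fst p) (snd p)) summable_on Sigma A (\<lambda>_. B)"
    using abs_summable_summable[OF H] .
  then have "(\<lambda>(x,y). f x y) summable_on A \<times> B"
    by (simp add: case_prod_beta')
  then show ?thesis by (rule infsum_swap_banach)
qed


lemma pow_bound:
  fixes \<rho> B \<theta> :: real
  assumes "0 \<le> \<rho>" "0 \<le> B" "1 < \<theta>" "\<theta>*\<rho>*B \<le> 1"
  shows "\<rho>^(x+z) * B^(y+z) \<le> (max B (\<theta>*\<rho>))^(x+y) * (1/\<theta>)^(x+z)"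
proof -
  let ?M = "max B (\<theta>*\<rho>)"
  have eq: "\<rho>^(x+z) * B^(y+z) = ((\<theta>*\<rho>)^x * B^y * (\<theta>*\<rho>*B)^z) * (1/\<theta>)^(x+z)"
    using assms(3) by (simp add: power_add power_mult_distrib field_simps)
  have a1: "(\<theta>*\<rho>)^x \<le> ?M^x" by (rule power_mono) (use assms in auto)
  have a2: "B^y \<le> ?M^y" by (rule power_mono) (use assms in auto)
  have a3: "(\<theta>*\<rho>*B)^z \<le> 1" by (rule power_le_one) (use assms in auto)
  have "(\<theta>*\<rho>)^x * B^y * (\<theta>*\<rho>*B)^z \<le> ?M^x * ?M^y * 1"
    by (intro mult_mono a1 a2 a3) (use assms in auto)
  then have "(\<theta>*\<rho>)^x * B^y * (\<theta>*\<rho>*B)^z \<le> ?M^(x+y)" by (simp add: power_add)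
  then have "((\<theta>*\<rho>)^x * B^y * (\<theta>*\<rho>*B)^z) * (1/\<theta>)^(x+z) \<le> ?M^(x+y) * (1/\<theta>)^(x+z)"
    by (rule mult_right_mono) (use assms in auto)
  then show ?thesis using eq by simp
qed

lemma sum_int_nat: "(\<And>i. i \<in> A \<Longrightarrow> 0 \<le> f i) \<Longrightarrow> int (\<Sum>i\<in>A. nat (f i)) = (\<Sum>i\<in>A. f i)"
  by (simp add: of_nat_sum)

lemma M1:
  fixes \<rho> B \<theta> :: real
  assumes \<kappa>: "\<kappa> \<in> Sign (2*k)" and \<rho>: "0 \<le> \<rho>" and B: "0 \<le> B" and \<theta>: "1 < \<theta>" and c: "\<theta>*\<rho>*B \<le> 1"
  shows "(\<lambda>l. sk1r \<kappa> l \<rho> * taur l B) summable_on Sign (2*k) \<and>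
         (\<Sum>\<^sub>\<infinity>l\<in>Sign (2*k). sk1r \<kappa> l \<rho> * taur l B) \<le> (1/(1-1/\<theta>))^(2*k) * taur \<kappa> (max B (\<theta>*\<rho>))"
proof -
  let ?S = "Sign (2*k)"
  define T where "T = {l \<in> ?S. interlace l \<kappa>}"
  define f where "f l = sk1r \<kappa> l \<rho> * taur l B" for l
  define M where "M = max B (\<theta>*\<rho>)"
  define K where "K = taur \<kappa> M"
  define h where "h l = map (\<lambda>i. nat (\<kappa>!i - l!i)) [0..<2*k]" for l
  have lk: "length \<kappa> = 2*k" using \<kappa> by (simp add: Sign_iff)
  have M0: "0 \<le> M" using B by (simp add: M_def)
  have K0: "0 \<le> K" unfolding K_def by (rule taur_nonneg[OF \<kappa> M0])
  have q: "0 \<le> 1/\<theta>" "1/\<theta> < 1" using \<theta> by auto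
  have inj: "inj_on h T"
  proof (rule inj_onI)
    fix l l' assume l: "l \<in> T" and l': "l' \<in> T" and e: "h l = h l'"
    have ll: "length l = 2*k" "length l' = 2*k" using l l' by (auto simp: T_def Sign_iff)
    have i1: "\<forall>i<2*k. l!i \<le> \<kappa>!i" "\<forall>i<2*k. l'!i \<le> \<kappa>!i"
      using l l' lk by (auto simp: T_def interlace_def)
    show "l = l'"
    proof (rule nth_equalityI)
      show "length l = length l'" using ll by simp
      fix i assume "i < length l"
      then have i: "i < 2*k" using ll by simp
      have "h l ! i = h l' ! i" using e by simp
      then have "nat (\<kappa>!i - l!i) = nat (\<kappa>!i - l'!i)" using i by (simp add: h_def)
      moreover have "0 \<le> \<kappa>!i - l!i" "0 \<le> \<kappa>!i - l'!i" using i1 i by auto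
      ultimately have "\<kappa>!i - l!i = \<kappa>!i - l'!i" using eq_nat_nat_iff by blast
      then show "l!i = l'!i" by simp
    qed
  qed
  have len: "length (h l) = 2*k" for l by (simp add: h_def)
  have fb: "0 \<le> f l \<and> f l \<le> K * (1/\<theta>) ^ sum_list (h l)" if l: "l \<in> T" for l
  proof -
    have lS: "l \<in> ?S" and il: "interlace l \<kappa>" using l by (auto simp: T_def)
    have ll: "length l = 2*k" using lS by (simp add: Sign_iff)
    have c1: "\<And>i. i < 2*k \<Longrightarrow> l!i \<le> \<kappa>!i" and c2: "\<And>i. Suc i < 2*k \<Longrightarrow> \<kappa>!Suc i \<le> l!i"
      using il lk by (auto simp: interlace_def)
    define X where "X = (\<Sum>m<k. \<kappa>!(2*m) - l!(2*m))"
    define Y where "Y = (\<Sum>m<k. l!(2*m) - \<kappa>!(2*m+1))"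
    define Z where "Z = (\<Sum>m<k. \<kappa>!(2*m+1) - l!(2*m+1))"
    have X0: "0 \<le> X" unfolding X_def by (intro sum_nonneg) (use c1 in auto)
    have Y0: "0 \<le> Y" unfolding Y_def by (intro sum_nonneg) (use c2 in auto)
    have Z0: "0 \<le> Z" unfolding Z_def by (intro sum_nonneg) (use c1 in auto)
    have ss: "skew_size \<kappa> l = X + Z"
      unfolding skew_size_eq[OF lk] pair_sum X_def Z_def sum.distrib[symmetric]
      by (rule sum.cong) auto
    have al: "alt l = Y + Z"
      unfolding alt_pairs[OF ll] Y_def Z_def sum.distrib[symmetric]
      by (rule sum.cong) auto
    have ak: "alt \<kappa> = X + Y"
      unfolding alt_pairs[OF lk] X_def Y_def sum.distrib[symmetric]
      by (rule sum.cong) auto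
    have sl: "int (sum_list (h l)) = X + Z"
    proof -
      have "sum_list (h l) = (\<Sum>i<2*k. nat (\<kappa>!i - l!i))"
        by (simp add: h_def interv_sum_list_conv_sum_set_nat atLeast0LessThan)
      then have "int (sum_list (h l)) = (\<Sum>i<2*k. \<kappa>!i - l!i)"
        using c1 by (simp add: of_nat_sum)
      then show ?thesis using ss skew_size_eq[OF lk] by simp
    qed
    obtain x y z where xyz: "X = int x" "Y = int y" "Z = int z"
      using X0 Y0 Z0 by (metis nonneg_int_cases)
    have pw: "B powi (int y + int z) = B^(y+z)" by (metis of_nat_add power_int_of_nat)
    have fl: "f l = \<rho>^(x+z) * B^(y+z)"
      using il ss al xyz pw by (simp add: f_def sk1r_def taur_def nat_add_distrib)
    have Kl: "K * (1/\<theta>) ^ sum_list (h l) = M^(x+y) * (1/\<theta>)^(x+z)"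
    proof -
      have "sum_list (h l) = x + z" using sl xyz by simp
      moreover have "K = M^(x+y)" using ak xyz by (simp add: K_def taur_def) (metis of_nat_add power_int_of_nat)
      ultimately show ?thesis by simp
    qed
    have "f l \<le> K * (1/\<theta>) ^ sum_list (h l)"
      using pow_bound[OF \<rho> B \<theta> c, of x z y] fl Kl by (simp add: M_def)
    moreover have "0 \<le> f l" using fl \<rho> B by simp
    ultimately show ?thesis by simp
  qed
  have main: "f summable_on T \<and> infsum f T \<le> K * (1/(1-1/\<theta>))^(2*k)"
    by (rule bound_by_Lq[OF q inj len K0 fb])
  have z: "f l = 0" if "l \<in> ?S - T" for l using that by (simp add: T_def f_def sk1r_def)
  have TS: "T \<subseteq> ?S" by (auto simp: T_def)
  have "f summable_on ?S \<longleftrightarrow> f summable_on T"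
    by (rule summable_on_cong_neutral) (use z TS in auto)
  moreover have "infsum f ?S = infsum f T"
    by (rule infsum_cong_neutral) (use z TS in auto)
  ultimately have "f summable_on ?S \<and> infsum f ?S \<le> K * (1/(1-1/\<theta>))^(2*k)" using main by simp
  then show ?thesis unfolding f_def[abs_def] K_def M_def by (simp add: mult.commute)
qed


lemma M2:
  fixes \<rho> B \<theta> :: real
  assumes \<kappa>: "\<kappa> \<in> Sign (2*k)" and \<rho>: "0 \<le> \<rho>" and B: "0 \<le> B" and \<theta>: "1 < \<theta>" and c: "\<theta>*\<rho>*B \<le> 1"
  shows "(\<lambda>l. sk1r l \<kappa> \<rho> * taur l B) summable_on Sign (2*k) \<and>
         (\<Sum>\<^sub>\<infinity>l\<in>Sign (2*k). sk1r l \<kappa> \<rho> * taur l B) \<le> (1/(1-1/\<theta>))^(2*k) * taur \<kappa> (max B (\<theta>*\<rho>))"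
proof -
  let ?S = "Sign (2*k)"
  define T where "T = {l \<in> ?S. interlace \<kappa> l}"
  define f where "f l = sk1r l \<kappa> \<rho> * taur l B" for l
  define M where "M = max B (\<theta>*\<rho>)"
  define K where "K = taur \<kappa> M"
  define h where "h l = map (\<lambda>i. nat (l!i - \<kappa>!i)) [0..<2*k]" for l
  have lk: "length \<kappa> = 2*k" using \<kappa> by (simp add: Sign_iff)
  have M0: "0 \<le> M" using B by (simp add: M_def)
  have K0: "0 \<le> K" unfolding K_def by (rule taur_nonneg[OF \<kappa> M0])
  have q: "0 \<le> 1/\<theta>" "1/\<theta> < 1" using \<theta> by auto
  have inj: "inj_on h T"
  proof (rule inj_onI)
    fix l l' assume l: "l \<in> T" and l': "l' \<in> T" and e: "h l = h l'"
    have ll: "length l = 2*k" "length l' = 2*k" using l l' by (auto simp: T_def Sign_iff)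
    have i1: "\<forall>i<2*k. \<kappa>!i \<le> l!i" "\<forall>i<2*k. \<kappa>!i \<le> l'!i"
      using l l' lk by (auto simp: T_def interlace_def)
    show "l = l'"
    proof (rule nth_equalityI)
      show "length l = length l'" using ll by simp
      fix i assume "i < length l"
      then have i: "i < 2*k" using ll by simp
      have "h l ! i = h l' ! i" using e by simp
      then have "nat (l!i - \<kappa>!i) = nat (l'!i - \<kappa>!i)" using i by (simp add: h_def)
      moreover have "0 \<le> l!i - \<kappa>!i" "0 \<le> l'!i - \<kappa>!i" using i1 i by auto
      ultimately have "l!i - \<kappa>!i = l'!i - \<kappa>!i" using eq_nat_nat_iff by blast
      then show "l!i = l'!i" by simp
    qed
  qed
  have len: "length (h l) = 2*k" for l by (simp add: h_def)
  have fb: "0 \<le> f l \<and> f l \<le> K * (1/\<theta>) ^ sum_list (h l)" if l: "l \<in> T" for l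
  proof -
    have lS: "l \<in> ?S" and il: "interlace \<kappa> l" using l by (auto simp: T_def)
    have ll: "length l = 2*k" using lS by (simp add: Sign_iff)
    have c1: "\<And>i. i < 2*k \<Longrightarrow> \<kappa>!i \<le> l!i" and c2: "\<And>i. Suc i < 2*k \<Longrightarrow> l!Suc i \<le> \<kappa>!i"
      using il ll by (auto simp: interlace_def)
    define X where "X = (\<Sum>m<k. l!(2*m) - \<kappa>!(2*m))"
    define Y where "Y = (\<Sum>m<k. \<kappa>!(2*m) - l!(2*m+1))"
    define Z where "Z = (\<Sum>m<k. l!(2*m+1) - \<kappa>!(2*m+1))"
    have X0: "0 \<le> X" unfolding X_def by (intro sum_nonneg) (use c1 in auto)
    have Y0: "0 \<le> Y" unfolding Y_def by (intro sum_nonneg) (use c2 in auto)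
    have Z0: "0 \<le> Z" unfolding Z_def by (intro sum_nonneg) (use c1 in auto)
    have ss: "skew_size l \<kappa> = X + Z"
      unfolding skew_size_eq[OF ll] pair_sum X_def Z_def sum.distrib[symmetric]
      by (rule sum.cong) auto
    have al: "alt l = X + Y"
      unfolding alt_pairs[OF ll] X_def Y_def sum.distrib[symmetric]
      by (rule sum.cong) auto
    have ak: "alt \<kappa> = Z + Y"
      unfolding alt_pairs[OF lk] Z_def Y_def sum.distrib[symmetric]
      by (rule sum.cong) auto
    have sl: "int (sum_list (h l)) = X + Z"
    proof -
      have "sum_list (h l) = (\<Sum>i<2*k. nat (l!i - \<kappa>!i))"
        by (simp add: h_def interv_sum_list_conv_sum_set_nat atLeast0LessThan)
      then have "int (sum_list (h l)) = (\<Sum>i<2*k. l!i - \<kappa>!i)"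
        using c1 by (simp add: of_nat_sum)
      then show ?thesis using ss skew_size_eq[OF ll] by simp
    qed
    obtain x y z where xyz: "X = int x" "Y = int y" "Z = int z"
      using X0 Y0 Z0 by (metis nonneg_int_cases)
    have pw: "B powi (int x + int y) = B^(y+x)" by (metis add.commute of_nat_add power_int_of_nat)
    have fl: "f l = \<rho>^(z+x) * B^(y+x)"
      using il ss al xyz pw by (simp add: f_def sk1r_def taur_def nat_add_distrib add.commute)
    have Kl: "K * (1/\<theta>) ^ sum_list (h l) = M^(z+y) * (1/\<theta>)^(z+x)"
    proof -
      have "sum_list (h l) = z + x" using sl xyz by simp
      moreover have "K = M^(z+y)" using ak xyz by (simp add: K_def taur_def) (metis of_nat_add power_int_of_nat)
      ultimately show ?thesis by simp
    qed
    have "f l \<le> K * (1/\<theta>) ^ sum_list (h l)"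
      using pow_bound[OF \<rho> B \<theta> c, of z x y] fl Kl by (simp add: M_def)
    moreover have "0 \<le> f l" using fl \<rho> B by simp
    ultimately show ?thesis by simp
  qed
  have main: "f summable_on T \<and> infsum f T \<le> K * (1/(1-1/\<theta>))^(2*k)"
    by (rule bound_by_Lq[OF q inj len K0 fb])
  have z: "f l = 0" if "l \<in> ?S - T" for l using that by (simp add: T_def f_def sk1r_def)
  have TS: "T \<subseteq> ?S" by (auto simp: T_def)
  have "f summable_on ?S \<longleftrightarrow> f summable_on T"
    by (rule summable_on_cong_neutral) (use z TS in auto)
  moreover have "infsum f ?S = infsum f T"
    by (rule infsum_cong_neutral) (use z TS in auto)
  ultimately have "f summable_on ?S \<and> infsum f ?S \<le> K * (1/(1-1/\<theta>))^(2*k)" using main by simp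
  then show ?thesis unfolding f_def[abs_def] K_def M_def by (simp add: mult.commute)
qed



lemma powi_between:
  fixes r :: real assumes "0 < r" "e1 \<le> e" "e \<le> e2"
  shows "r powi e \<le> max (r powi e1) (r powi e2)"
proof (cases "r \<ge> 1")
  case True
  then have "r powi e \<le> r powi e2" using power_int_increasing[of e e2 r] assms by simp
  then show ?thesis by simp
next
  case False
  then have "r powi e \<le> r powi e1" using power_int_decreasing[of e1 e r] assms by simp
  then show ?thesis by simp
qed

lemma sum_minus_alt:
  assumes "length l = 2*k"
  shows "(\<Sum>i<2*k. l!i) - alt l = (\<Sum>m<k. 2 * l!(2*m+1))"
    and "(\<Sum>i<2*k. l!i) + alt l = (\<Sum>m<k. 2 * l!(2*m))"
proof -
  have A: "(\<Sum>i<2*k. l!i) = (\<Sum>m<k. l!(2*m) + l!(2*m+1))" by (rule pair_sum)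
  show "(\<Sum>i<2*k. l!i) - alt l = (\<Sum>m<k. 2 * l!(2*m+1))"
    unfolding A alt_pairs[OF assms] sum_subtractf[symmetric] by (rule sum.cong) auto
  show "(\<Sum>i<2*k. l!i) + alt l = (\<Sum>m<k. 2 * l!(2*m))"
    unfolding A alt_pairs[OF assms] sum.distrib[symmetric] by (rule sum.cong) auto
qed

lemma M4up:
  fixes r :: real
  assumes r: "0 < r" and lam: "lam \<in> Sign (2*k)"
  shows "\<exists>C\<ge>0. \<forall>\<nu>\<in>Sign (2*k). sk1r \<nu> lam r \<le> C * taur \<nu> r"
proof -
  have ll: "length lam = 2*k" using lam by (simp add: Sign_iff)
  define e1 where "e1 = (\<Sum>m<k. 2 * lam!(2*m+1)) - (\<Sum>i<2*k. lam!i)"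
  define e2 where "e2 = (\<Sum>m<k. 2 * lam!(2*m)) - (\<Sum>i<2*k. lam!i)"
  define C where "C = max (r powi e1) (r powi e2)"
  have C0: "0 \<le> C" using r by (simp add: C_def le_max_iff_disj)
  show ?thesis
  proof (intro exI[of _ C] conjI ballI)
    show "0 \<le> C" by (rule C0)
    fix \<nu> assume nu: "\<nu> \<in> Sign (2*k)"
    have ln: "length \<nu> = 2*k" using nu by (simp add: Sign_iff)
    show "sk1r \<nu> lam r \<le> C * taur \<nu> r"
    proof (cases "interlace lam \<nu>")
      case False
      then show ?thesis using C0 taur_nonneg[OF nu, of r] r by (simp add: sk1r_def)
    next
      case True
      have c1: "\<And>i. i < 2*k \<Longrightarrow> lam!i \<le> \<nu>!i" and c2: "\<And>i. Suc i < 2*k \<Longrightarrow> \<nu>!Suc i \<le> lam!i"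
        using True ln by (auto simp: interlace_def)
      define ss where "ss = skew_size \<nu> lam"
      have ssv: "ss = (\<Sum>i<2*k. \<nu>!i) - (\<Sum>i<2*k. lam!i)"
        unfolding ss_def skew_size_eq[OF ln] by (simp add: sum_subtractf)
      have ss0: "0 \<le> ss" unfolding ss_def skew_size_eq[OF ln] by (intro sum_nonneg) (use c1 in auto)
      define e where "e = ss - alt \<nu>"
      have ev: "e = (\<Sum>m<k. 2 * \<nu>!(2*m+1)) - (\<Sum>i<2*k. lam!i)"
        unfolding e_def ssv using sum_minus_alt(1)[OF ln] by simp
      have "(\<Sum>m<k. 2 * lam!(2*m+1)) \<le> (\<Sum>m<k. 2 * \<nu>!(2*m+1))"
        by (intro sum_mono) (use c1 in auto)
      then have e1e: "e1 \<le> e" unfolding e1_def ev by simp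
      have "(\<Sum>m<k. 2 * \<nu>!(2*m+1)) \<le> (\<Sum>m<k. 2 * lam!(2*m))"
        by (intro sum_mono) (use c2 in auto)
      then have ee2: "e \<le> e2" unfolding e2_def ev by simp
      have "sk1r \<nu> lam r = r powi ss" using True ss0 by (simp add: sk1r_def ss_def power_int_def)
      also have "\<dots> = r powi e * r powi (alt \<nu>)" unfolding e_def using r by (simp add: power_int_add[symmetric])
      also have "\<dots> \<le> C * taur \<nu> r" unfolding taur_def C_def
        by (rule mult_right_mono[OF powi_between[OF r e1e ee2]]) (use r in simp)
      finally show ?thesis .
    qed
  qed
qed

lemma M4low:
  fixes r :: real
  assumes r: "0 < r" and pi: "p \<in> Sign (2*k)"
  shows "\<exists>C\<ge>0. \<forall>\<nu>\<in>Sign (2*k). sk1r p \<nu> r \<le> C * taur \<nu> r"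
proof -
  have lp: "length p = 2*k" using pi by (simp add: Sign_iff)
  define e1 where "e1 = (\<Sum>i<2*k. p!i) - (\<Sum>m<k. 2 * p!(2*m))"
  define e2 where "e2 = (\<Sum>i<2*k. p!i) - (\<Sum>m<k. 2 * p!(2*m+1))"
  define C where "C = max (r powi e1) (r powi e2)"
  have C0: "0 \<le> C" using r by (simp add: C_def le_max_iff_disj)
  show ?thesis
  proof (intro exI[of _ C] conjI ballI)
    show "0 \<le> C" by (rule C0)
    fix \<nu> assume nu: "\<nu> \<in> Sign (2*k)"
    have ln: "length \<nu> = 2*k" using nu by (simp add: Sign_iff)
    show "sk1r p \<nu> r \<le> C * taur \<nu> r"
    proof (cases "interlace \<nu> p")
      case False
      then show ?thesis using C0 taur_nonneg[OF nu, of r] r by (simp add: sk1r_def)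
    next
      case True
      have c1: "\<And>i. i < 2*k \<Longrightarrow> \<nu>!i \<le> p!i" and c2: "\<And>i. Suc i < 2*k \<Longrightarrow> p!Suc i \<le> \<nu>!i"
        using True lp by (auto simp: interlace_def)
      define ss where "ss = skew_size p \<nu>"
      have ssv: "ss = (\<Sum>i<2*k. p!i) - (\<Sum>i<2*k. \<nu>!i)"
        unfolding ss_def skew_size_eq[OF lp] by (simp add: sum_subtractf)
      have ss0: "0 \<le> ss" unfolding ss_def skew_size_eq[OF lp] by (intro sum_nonneg) (use c1 in auto)
      define e where "e = ss - alt \<nu>"
      have ev: "e = (\<Sum>i<2*k. p!i) - (\<Sum>m<k. 2 * \<nu>!(2*m))"
        unfolding e_def ssv using sum_minus_alt(2)[OF ln] by simp
      have "(\<Sum>m<k. 2 * \<nu>!(2*m)) \<le> (\<Sum>m<k. 2 * p!(2*m))"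
        by (intro sum_mono) (use c1 in auto)
      then have e1e: "e1 \<le> e" unfolding e1_def ev by simp
      have "(\<Sum>m<k. 2 * p!(2*m+1)) \<le> (\<Sum>m<k. 2 * \<nu>!(2*m))"
        by (intro sum_mono) (use c2 in auto)
      then have ee2: "e \<le> e2" unfolding e2_def ev by simp
      have "sk1r p \<nu> r = r powi ss" using True ss0 by (simp add: sk1r_def ss_def power_int_def)
      also have "\<dots> = r powi e * r powi (alt \<nu>)" unfolding e_def using r by (simp add: power_int_add[symmetric])
      also have "\<dots> \<le> C * taur \<nu> r" unfolding taur_def C_def
        by (rule mult_right_mono[OF powi_between[OF r e1e ee2]]) (use r in simp)
      finally show ?thesis .
    qed
  qed
qed



fun Fw :: "real \<Rightarrow> real list \<Rightarrow> real \<Rightarrow> real" where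
  "Fw \<theta> [] B = B"
| "Fw \<theta> (r#rs) B = max (\<theta>*r) (Fw \<theta> rs B)"

lemma Fw_snoc: "Fw \<theta> (rs@[r]) B = Fw \<theta> rs (max B (\<theta>*r))"
  by (induction rs) auto

lemma Fw_snoc2: "Fw \<theta> (rs@[r]) B = max (Fw \<theta> rs B) (\<theta>*r)"
  by (induction rs) (auto simp: max.assoc max.commute max.left_commute)

lemma Fw_ge: "B \<le> Fw \<theta> rs B"
  by (induction rs) auto

lemma Fw_le: "B \<le> t \<Longrightarrow> (\<forall>r\<in>set rs. \<theta>*r \<le> t) \<Longrightarrow> Fw \<theta> rs B \<le> t"
  by (induction rs) auto

definition good :: "real \<Rightarrow> real \<Rightarrow> complex list \<Rightarrow> real list \<Rightarrow> bool" where
  "good \<theta> B as rs \<longleftrightarrow> length rs = length as \<and>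
     (\<forall>i<length as. norm (as!i) \<le> rs!i \<and> 0 < rs!i \<and> \<theta>*rs!i*B \<le> 1) \<and>
     (\<forall>i<length as. \<forall>j<length as. i \<noteq> j \<longrightarrow> \<theta>*\<theta>*rs!i*rs!j \<le> 1)"

lemma good_snoc:
  assumes "good \<theta> B (as@[x]) rs'"
  obtains rs r where "rs' = rs@[r]" "good \<theta> B as rs" "norm x \<le> r" "0 < r" "\<theta>*r*B \<le> 1"
    "\<forall>r'\<in>set rs. \<theta>*\<theta>*r'*r \<le> 1"
proof -
  have len: "length rs' = Suc (length as)" using assms by (simp add: good_def)
  then obtain rs r where rs': "rs' = rs@[r]" by (metis length_0_conv nat.distinct(1) rev_exhaust)
  have lr: "length rs = length as" using len rs' by simp
  have A: "\<forall>i<Suc (length as). norm ((as@[x])!i) \<le> (rs@[r])!i \<and> 0 < (rs@[r])!i \<and> \<theta>*(rs@[r])!i*B \<le> 1"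
    and P: "\<forall>i<Suc (length as). \<forall>j<Suc (length as). i \<noteq> j \<longrightarrow> \<theta>*\<theta>*(rs@[r])!i*(rs@[r])!j \<le> 1"
    using assms rs' by (auto simp: good_def)
  have g: "good \<theta> B as rs"
    unfolding good_def
  proof (intro conjI allI impI)
    show "length rs = length as" by (rule lr)
    fix i assume i: "i < length as"
    then show "norm (as!i) \<le> rs!i" "0 < rs!i" "\<theta>*rs!i*B \<le> 1"
      using A[rule_format, of i] lr by (auto simp: nth_append)
    fix j assume j: "j < length as" and ij: "i \<noteq> j"
    then show "\<theta>*\<theta>*rs!i*rs!j \<le> 1" using P[rule_format, of i j] i lr by (auto simp: nth_append)
  qed
  have l: "norm x \<le> r" "0 < r" "\<theta>*r*B \<le> 1"
    using A[rule_format, of "length as"] lr by (auto simp: nth_append)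
  have p: "\<forall>r'\<in>set rs. \<theta>*\<theta>*r'*r \<le> 1"
  proof
    fix r' assume "r' \<in> set rs"
    then obtain i where i: "i < length rs" "r' = rs!i" by (auto simp: in_set_conv_nth)
    then show "\<theta>*\<theta>*r'*r \<le> 1" using P[rule_format, of i "length as"] lr by (auto simp: nth_append)
  qed
  show ?thesis using that[OF rs' g l p] .
qed

lemma good_max:
  assumes g: "good \<theta> B as rs" and p: "\<forall>r'\<in>set rs. \<theta>*\<theta>*r'*r \<le> 1" and th: "0 < \<theta>"
  shows "good \<theta> (max B (\<theta>*r)) as rs"
  unfolding good_def
proof (intro conjI allI impI)
  show "length rs = length as" using g by (simp add: good_def)
  fix i assume i: "i < length as"
  have ri: "0 < rs!i" "\<theta>*rs!i*B \<le> 1" "norm (as!i) \<le> rs!i" using g i by (auto simp: good_def)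
  have "rs!i \<in> set rs" using g i by (simp add: good_def)
  then have "\<theta>*\<theta>*rs!i*r \<le> 1" using p by blast
  then have "\<theta>*rs!i*(\<theta>*r) \<le> 1" by (simp add: mult_ac)
  then show "\<theta>*rs!i*max B (\<theta>*r) \<le> 1" using ri th by (simp add: max_def)
  show "norm (as!i) \<le> rs!i" "0 < rs!i" using ri by auto
  fix j assume "j < length as" "i \<noteq> j"
  then show "\<theta>*\<theta>*rs!i*rs!j \<le> 1" using g i by (simp add: good_def)
qed

lemma good_mono:
  assumes g: "good \<theta> B as rs" and "0 \<le> B'" "B' \<le> B" "0 \<le> \<theta>"
  shows "good \<theta> B' as rs"
  unfolding good_def
proof (intro conjI allI impI)
  show "length rs = length as" using g by (simp add: good_def)
  fix i assume i: "i < length as"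
  have ri: "0 < rs!i" "\<theta>*rs!i*B \<le> 1" "norm (as!i) \<le> rs!i" using g i by (auto simp: good_def)
  have "\<theta>*rs!i*B' \<le> \<theta>*rs!i*B" by (rule mult_left_mono) (use assms ri in auto)
  then show "\<theta>*rs!i*B' \<le> 1" using ri by simp
  show "norm (as!i) \<le> rs!i" "0 < rs!i" using ri by auto
  fix j assume "j < length as" "i \<noteq> j"
  then show "\<theta>*\<theta>*rs!i*rs!j \<le> 1" using g i by (simp add: good_def)
qed

lemma good_Fw:
  assumes g: "good \<theta> B as rs" and r: "0 < r" and th: "0 < \<theta>" and rB: "\<theta>*r*B \<le> 1"
    and p: "\<forall>r'\<in>set rs. \<theta>*\<theta>*r'*r \<le> 1"
  shows "\<theta>*r*Fw \<theta> rs B \<le> 1"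
proof -
  have tr: "0 < \<theta>*r" using r th by simp
  have "Fw \<theta> rs B \<le> 1/(\<theta>*r)"
  proof (rule Fw_le)
    show "B \<le> 1/(\<theta>*r)" using rB tr by (simp add: pos_le_divide_eq mult_ac)
    show "\<forall>r'\<in>set rs. \<theta>*r' \<le> 1/(\<theta>*r)"
      using p tr by (auto simp: pos_le_divide_eq mult_ac)
  qed
  then show ?thesis using tr by (simp add: pos_le_divide_eq mult_ac)
qed

lemma has_sum_single:
  fixes v :: "'b::{comm_monoid_add, topological_space}"
  assumes "x \<in> A"
  shows "((\<lambda>y. if y = x then v else 0) has_sum v) A"
proof -
  have "((\<lambda>y. if y = x then v else 0) has_sum v) {x}"
    by (rule has_sum_finiteI) auto
  then show ?thesis
    by (subst (asm) has_sum_cong_neutral[of A "{x}" "\<lambda>y. if y = x then v else 0"]) (use assms in auto)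
qed

lemma skew_Nil: "skew n \<kappa> l [] = (if \<kappa> = l then 1 else 0)"
  by (simp add: skew_def)

lemma skew_snoc: "skew n \<kappa> l (as@[x]) = (\<Sum>\<^sub>\<infinity>\<nu>\<in>Sign n. skew n \<kappa> \<nu> as * skew1 \<nu> l x)"
  by (simp add: skew_def)



lemma K1_nonneg: "1 < (\<theta>::real) \<Longrightarrow> 0 \<le> (1/(1-1/\<theta>))^m"
proof -
  assume "1 < \<theta>"
  then have "1/\<theta> < 1" by simp
  then show ?thesis by simp
qed

lemma M3D:
  assumes th: "1 < \<theta>" and B: "0 < B" and g: "good \<theta> B as rs"
  shows "\<exists>C\<ge>0. \<forall>\<kappa>\<in>Sign (2*k).
     (\<lambda>l. norm (skew (2*k) \<kappa> l as) * taur l B) summable_on Sign (2*k) \<and>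
     (\<Sum>\<^sub>\<infinity>l\<in>Sign (2*k). norm (skew (2*k) \<kappa> l as) * taur l B) \<le> C * taur \<kappa> (Fw \<theta> rs B)"
  using B g
proof (induction as arbitrary: B rs rule: rev_induct)
  case Nil
  then have rs: "rs = []" by (simp add: good_def)
  show ?case
  proof (intro exI[of _ 1] conjI ballI)
    fix \<kappa> assume \<kappa>: "\<kappa> \<in> Sign (2*k)"
    have e: "(\<lambda>l. norm (skew (2*k) \<kappa> l []) * taur l B) = (\<lambda>l. if l = \<kappa> then taur \<kappa> B else 0)"
      by (auto simp: skew_Nil fun_eq_iff)
    have hs: "((\<lambda>l. if l = \<kappa> then taur \<kappa> B else 0) has_sum taur \<kappa> B) (Sign (2*k))"
      by (rule has_sum_single[OF \<kappa>])
    show "(\<lambda>l. norm (skew (2*k) \<kappa> l []) * taur l B) summable_on Sign (2*k)"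
      using hs e by (metis has_sum_imp_summable)
    show "(\<Sum>\<^sub>\<infinity>l\<in>Sign (2*k). norm (skew (2*k) \<kappa> l []) * taur l B) \<le> 1 * taur \<kappa> (Fw \<theta> rs B)"
      using infsumI[OF hs] e rs by simp
  qed simp
next
  case (snoc x as)
  from snoc.prems(2) obtain rs0 r where rs: "rs = rs0@[r]" and g0: "good \<theta> B as rs0"
    and xr: "norm x \<le> r" and r0: "0 < r" and rB: "\<theta>*r*B \<le> 1" and pr: "\<forall>r'\<in>set rs0. \<theta>*\<theta>*r'*r \<le> 1"
    by (rule good_snoc)
  define B1 where "B1 = max B (\<theta>*r)"
  have B0: "0 < B" by (rule snoc.prems(1))
  have B1: "0 < B1" using B0 by (simp add: B1_def)
  have g1: "good \<theta> B1 as rs0" unfolding B1_def by (rule good_max[OF g0 pr]) (use th in simp)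
  obtain C1 where C1: "C1 \<ge> 0" and IH: "\<forall>\<kappa>\<in>Sign (2*k).
     (\<lambda>l. norm (skew (2*k) \<kappa> l as) * taur l B1) summable_on Sign (2*k) \<and>
     (\<Sum>\<^sub>\<infinity>l\<in>Sign (2*k). norm (skew (2*k) \<kappa> l as) * taur l B1) \<le> C1 * taur \<kappa> (Fw \<theta> rs0 B1)"
    using snoc.IH[OF B1 g1] by blast
  define K1 where "K1 = (1/(1-1/\<theta>))^(2*k)"
  have K1: "0 \<le> K1" unfolding K1_def by (rule K1_nonneg[OF th])
  show ?case
  proof (intro exI[of _ "K1*C1"] conjI ballI)
    show "0 \<le> K1*C1" using K1 C1 by simp
    fix \<kappa> assume \<kappa>: "\<kappa> \<in> Sign (2*k)"
    let ?S = "Sign (2*k)"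
    define g where "g \<nu> l = norm (skew (2*k) \<kappa> \<nu> as) * (sk1r \<nu> l r * taur l B)" for \<nu> l
    have M1n: "(\<lambda>l. sk1r \<nu> l r * taur l B) summable_on ?S \<and>
        (\<Sum>\<^sub>\<infinity>l\<in>?S. sk1r \<nu> l r * taur l B) \<le> K1 * taur \<nu> B1" if "\<nu> \<in> ?S" for \<nu>
      using M1[OF that _ _ th rB] r0 B0 by (simp add: K1_def B1_def)
    have fib: "g \<nu> summable_on ?S" if "\<nu> \<in> ?S" for \<nu>
      unfolding g_def[abs_def] using M1n[OF that] by (intro summable_on_cmult_right) simp
    have fibv: "infsum (g \<nu>) ?S \<le> K1 * (norm (skew (2*k) \<kappa> \<nu> as) * taur \<nu> B1)" if "\<nu> \<in> ?S" for \<nu>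
    proof -
      have "infsum (g \<nu>) ?S = norm (skew (2*k) \<kappa> \<nu> as) * (\<Sum>\<^sub>\<infinity>l\<in>?S. sk1r \<nu> l r * taur l B)"
        unfolding g_def by (rule infsum_cmult_right')
      also have "\<dots> \<le> norm (skew (2*k) \<kappa> \<nu> as) * (K1 * taur \<nu> B1)"
        by (rule mult_left_mono) (use M1n[OF that] in auto)
      finally show ?thesis by (simp add: mult_ac)
    qed
    have nn: "0 \<le> g \<nu> l" if "\<nu> \<in> ?S" "l \<in> ?S" for \<nu> l
      unfolding g_def using that r0 B0 by (intro mult_nonneg_nonneg sk1r_nonneg taur_nonneg) auto
    have IHk: "(\<lambda>\<nu>. norm (skew (2*k) \<kappa> \<nu> as) * taur \<nu> B1) summable_on ?S"
      "(\<Sum>\<^sub>\<infinity>\<nu>\<in>?S. norm (skew (2*k) \<kappa> \<nu> as) * taur \<nu> B1) \<le> C1 * taur \<kappa> (Fw \<theta> rs0 B1)"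
      using IH \<kappa> by auto
    have sK: "(\<lambda>\<nu>. K1 * (norm (skew (2*k) \<kappa> \<nu> as) * taur \<nu> B1)) summable_on ?S"
      by (rule summable_on_cmult_right[OF IHk(1)])
    have out: "(\<lambda>\<nu>. infsum (g \<nu>) ?S) summable_on ?S"
      by (rule summable_on_comparison_test[OF sK]) (use fibv nn in \<open>auto intro: infsum_nonneg\<close>)
    have "(\<Sum>\<^sub>\<infinity>\<nu>\<in>?S. infsum (g \<nu>) ?S) \<le> (\<Sum>\<^sub>\<infinity>\<nu>\<in>?S. K1 * (norm (skew (2*k) \<kappa> \<nu> as) * taur \<nu> B1))"
      by (rule infsum_mono[OF out sK]) (use fibv in auto)
    also have "\<dots> = K1 * (\<Sum>\<^sub>\<infinity>\<nu>\<in>?S. norm (skew (2*k) \<kappa> \<nu> as) * taur \<nu> B1)"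
      by (rule infsum_cmult_right')
    also have "\<dots> \<le> K1 * (C1 * taur \<kappa> (Fw \<theta> rs0 B1))"
      by (rule mult_left_mono[OF IHk(2) K1])
    finally have outv: "(\<Sum>\<^sub>\<infinity>\<nu>\<in>?S. infsum (g \<nu>) ?S) \<le> K1 * (C1 * taur \<kappa> (Fw \<theta> rs0 B1))" .
    have T1: "(\<lambda>\<nu>. g \<nu> l) summable_on ?S" if "l \<in> ?S" for l
      by (rule tonelli_real(1)[where A="?S" and B="?S" and g=g]) (use nn fib out that in auto)
    have T2: "(\<lambda>l. \<Sum>\<^sub>\<infinity>\<nu>\<in>?S. g \<nu> l) summable_on ?S"
      by (rule tonelli_real(2)[where A="?S" and B="?S" and g=g]) (use nn fib out in auto)
    have T3: "(\<Sum>\<^sub>\<infinity>l\<in>?S. \<Sum>\<^sub>\<infinity>\<nu>\<in>?S. g \<nu> l) = (\<Sum>\<^sub>\<infinity>\<nu>\<in>?S. infsum (g \<nu>) ?S)"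
      by (rule tonelli_real(3)[where A="?S" and B="?S" and g=g]) (use nn fib out in auto)
    have pw: "norm (skew (2*k) \<kappa> l (as@[x])) * taur l B \<le> (\<Sum>\<^sub>\<infinity>\<nu>\<in>?S. g \<nu> l)" if l: "l \<in> ?S" for l
    proof -
      have tp: "0 < taur l B" using B0 by (rule taur_pos)
      have s1: "(\<lambda>\<nu>. g \<nu> l) summable_on ?S" using T1[OF l] .
      have "(\<lambda>\<nu>. (norm (skew (2*k) \<kappa> \<nu> as) * sk1r \<nu> l r) * taur l B) summable_on ?S"
        using s1 by (simp add: g_def mult_ac)
      then have s2: "(\<lambda>\<nu>. norm (skew (2*k) \<kappa> \<nu> as) * sk1r \<nu> l r) summable_on ?S"
        using summable_on_cmult_left'[where c="taur l B" and f="\<lambda>\<nu>. norm (skew (2*k) \<kappa> \<nu> as) * sk1r \<nu> l r" and A="?S"] tp by simp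
      have bd: "norm (skew (2*k) \<kappa> \<nu> as * skew1 \<nu> l x) \<le> norm (skew (2*k) \<kappa> \<nu> as) * sk1r \<nu> l r" for \<nu>
        unfolding norm_mult norm_skew1 by (rule mult_left_mono[OF sk1r_mono]) (use xr in auto)
      have s3: "(\<lambda>\<nu>. norm (skew (2*k) \<kappa> \<nu> as * skew1 \<nu> l x)) summable_on ?S"
        by (rule Infinite_Sum.abs_summable_on_comparison_test'[OF s2]) (use bd in auto)
      have "norm (skew (2*k) \<kappa> l (as@[x])) = norm (\<Sum>\<^sub>\<infinity>\<nu>\<in>?S. skew (2*k) \<kappa> \<nu> as * skew1 \<nu> l x)"
        by (simp add: skew_snoc)
      also have "\<dots> \<le> (\<Sum>\<^sub>\<infinity>\<nu>\<in>?S. norm (skew (2*k) \<kappa> \<nu> as * skew1 \<nu> l x))"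
        by (rule norm_infsum_bound[OF s3])
      also have "\<dots> \<le> (\<Sum>\<^sub>\<infinity>\<nu>\<in>?S. norm (skew (2*k) \<kappa> \<nu> as) * sk1r \<nu> l r)"
        by (rule infsum_mono[OF s3 s2]) (use bd in auto)
      finally have "norm (skew (2*k) \<kappa> l (as@[x])) * taur l B \<le>
          (\<Sum>\<^sub>\<infinity>\<nu>\<in>?S. norm (skew (2*k) \<kappa> \<nu> as) * sk1r \<nu> l r) * taur l B"
        by (rule mult_right_mono) (use tp in simp)
      also have "\<dots> = (\<Sum>\<^sub>\<infinity>\<nu>\<in>?S. norm (skew (2*k) \<kappa> \<nu> as) * sk1r \<nu> l r * taur l B)"
        by (rule infsum_cmult_left'[symmetric])
      also have "\<dots> = (\<Sum>\<^sub>\<infinity>\<nu>\<in>?S. g \<nu> l)" by (simp add: g_def mult_ac)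
      finally show ?thesis .
    qed
    have sumL: "(\<lambda>l. \<Sum>\<^sub>\<infinity>\<nu>\<in>?S. g \<nu> l) summable_on ?S" by (rule T2)
    have summ: "(\<lambda>l. norm (skew (2*k) \<kappa> l (as@[x])) * taur l B) summable_on ?S"
      by (rule summable_on_comparison_test[OF sumL pw]) (use B0 in \<open>auto intro!: mult_nonneg_nonneg taur_nonneg\<close>)
    show "(\<lambda>l. norm (skew (2*k) \<kappa> l (as@[x])) * taur l B) summable_on ?S" by (rule summ)
    have "(\<Sum>\<^sub>\<infinity>l\<in>?S. norm (skew (2*k) \<kappa> l (as@[x])) * taur l B) \<le> (\<Sum>\<^sub>\<infinity>l\<in>?S. \<Sum>\<^sub>\<infinity>\<nu>\<in>?S. g \<nu> l)"
      by (rule infsum_mono[OF summ sumL pw])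
    also have "\<dots> = (\<Sum>\<^sub>\<infinity>\<nu>\<in>?S. infsum (g \<nu>) ?S)" by (rule T3)
    also have "\<dots> \<le> K1 * (C1 * taur \<kappa> (Fw \<theta> rs0 B1))" by (rule outv)
    also have "\<dots> = K1 * C1 * taur \<kappa> (Fw \<theta> rs B)" by (simp add: rs Fw_snoc B1_def)
    finally show "(\<Sum>\<^sub>\<infinity>l\<in>?S. norm (skew (2*k) \<kappa> l (as@[x])) * taur l B) \<le> K1 * C1 * taur \<kappa> (Fw \<theta> rs B)" .
  qed
qed

lemma M3U:
  assumes th: "1 < \<theta>" and B: "0 < B" and g: "good \<theta> B as rs"
  shows "\<exists>C\<ge>0. \<forall>\<kappa>\<in>Sign (2*k).
     (\<lambda>l. norm (skew (2*k) l \<kappa> as) * taur l B) summable_on Sign (2*k) \<and>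
     (\<Sum>\<^sub>\<infinity>l\<in>Sign (2*k). norm (skew (2*k) l \<kappa> as) * taur l B) \<le> C * taur \<kappa> (Fw \<theta> rs B)"
  using g
proof (induction as arbitrary: rs rule: rev_induct)
  case Nil
  then have rs: "rs = []" by (simp add: good_def)
  show ?case
  proof (intro exI[of _ 1] conjI ballI)
    fix \<kappa> assume \<kappa>: "\<kappa> \<in> Sign (2*k)"
    have e: "(\<lambda>l. norm (skew (2*k) l \<kappa> []) * taur l B) = (\<lambda>l. if l = \<kappa> then taur \<kappa> B else 0)"
      by (auto simp: skew_Nil fun_eq_iff)
    have hs: "((\<lambda>l. if l = \<kappa> then taur \<kappa> B else 0) has_sum taur \<kappa> B) (Sign (2*k))"
      by (rule has_sum_single[OF \<kappa>])
    show "(\<lambda>l. norm (skew (2*k) l \<kappa> []) * taur l B) summable_on Sign (2*k)"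
      using hs e by (metis has_sum_imp_summable)
    show "(\<Sum>\<^sub>\<infinity>l\<in>Sign (2*k). norm (skew (2*k) l \<kappa> []) * taur l B) \<le> 1 * taur \<kappa> (Fw \<theta> rs B)"
      using infsumI[OF hs] e rs by simp
  qed simp
next
  case (snoc x as)
  from snoc.prems obtain rs0 r where rs: "rs = rs0@[r]" and g0: "good \<theta> B as rs0"
    and xr: "norm x \<le> r" and r0: "0 < r" and rB: "\<theta>*r*B \<le> 1" and pr: "\<forall>r'\<in>set rs0. \<theta>*\<theta>*r'*r \<le> 1"
    by (rule good_snoc)
  define B2 where "B2 = Fw \<theta> rs0 B"
  have B2: "0 < B2" using B Fw_ge[of B \<theta> rs0] by (simp add: B2_def)
  have c2: "\<theta>*r*B2 \<le> 1" unfolding B2_def by (rule good_Fw[OF g0 r0 _ rB pr]) (use th in simp)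
  obtain C1 where C1: "C1 \<ge> 0" and IH: "\<forall>\<kappa>\<in>Sign (2*k).
     (\<lambda>l. norm (skew (2*k) l \<kappa> as) * taur l B) summable_on Sign (2*k) \<and>
     (\<Sum>\<^sub>\<infinity>l\<in>Sign (2*k). norm (skew (2*k) l \<kappa> as) * taur l B) \<le> C1 * taur \<kappa> B2"
    using snoc.IH[OF g0] unfolding B2_def by blast
  define K1 where "K1 = (1/(1-1/\<theta>))^(2*k)"
  have K1: "0 \<le> K1" unfolding K1_def by (rule K1_nonneg[OF th])
  show ?case
  proof (intro exI[of _ "C1*K1"] conjI ballI)
    show "0 \<le> C1*K1" using K1 C1 by simp
    fix \<kappa> assume \<kappa>: "\<kappa> \<in> Sign (2*k)"
    let ?S = "Sign (2*k)"
    define g where "g \<nu> l = sk1r \<nu> \<kappa> r * (norm (skew (2*k) l \<nu> as) * taur l B)" for \<nu> l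
    have M2k: "(\<lambda>\<nu>. sk1r \<nu> \<kappa> r * taur \<nu> B2) summable_on ?S \<and>
        (\<Sum>\<^sub>\<infinity>\<nu>\<in>?S. sk1r \<nu> \<kappa> r * taur \<nu> B2) \<le> K1 * taur \<kappa> (max B2 (\<theta>*r))"
      using M2[OF \<kappa> _ _ th c2] r0 B2 by (simp add: K1_def)
    have fib: "g \<nu> summable_on ?S" if "\<nu> \<in> ?S" for \<nu>
      unfolding g_def[abs_def] using IH that by (intro summable_on_cmult_right) simp
    have fibv: "infsum (g \<nu>) ?S \<le> C1 * (sk1r \<nu> \<kappa> r * taur \<nu> B2)" if "\<nu> \<in> ?S" for \<nu>
    proof -
      have "infsum (g \<nu>) ?S = sk1r \<nu> \<kappa> r * (\<Sum>\<^sub>\<infinity>l\<in>?S. norm (skew (2*k) l \<nu> as) * taur l B)"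
        unfolding g_def by (rule infsum_cmult_right')
      also have "\<dots> \<le> sk1r \<nu> \<kappa> r * (C1 * taur \<nu> B2)"
        by (rule mult_left_mono) (use IH that r0 in \<open>auto intro: sk1r_nonneg\<close>)
      finally show ?thesis by (simp add: mult_ac)
    qed
    have nn: "0 \<le> g \<nu> l" if "\<nu> \<in> ?S" "l \<in> ?S" for \<nu> l
      unfolding g_def using that r0 B by (intro mult_nonneg_nonneg sk1r_nonneg taur_nonneg) auto
    have sK: "(\<lambda>\<nu>. C1 * (sk1r \<nu> \<kappa> r * taur \<nu> B2)) summable_on ?S"
      using M2k by (intro summable_on_cmult_right) simp
    have out: "(\<lambda>\<nu>. infsum (g \<nu>) ?S) summable_on ?S"
      by (rule summable_on_comparison_test[OF sK]) (use fibv nn in \<open>auto intro: infsum_nonneg\<close>)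
    have "(\<Sum>\<^sub>\<infinity>\<nu>\<in>?S. infsum (g \<nu>) ?S) \<le> (\<Sum>\<^sub>\<infinity>\<nu>\<in>?S. C1 * (sk1r \<nu> \<kappa> r * taur \<nu> B2))"
      by (rule infsum_mono[OF out sK]) (use fibv in auto)
    also have "\<dots> = C1 * (\<Sum>\<^sub>\<infinity>\<nu>\<in>?S. sk1r \<nu> \<kappa> r * taur \<nu> B2)"
      by (rule infsum_cmult_right')
    also have "\<dots> \<le> C1 * (K1 * taur \<kappa> (max B2 (\<theta>*r)))"
      by (rule mult_left_mono) (use M2k C1 in auto)
    finally have outv: "(\<Sum>\<^sub>\<infinity>\<nu>\<in>?S. infsum (g \<nu>) ?S) \<le> C1 * (K1 * taur \<kappa> (max B2 (\<theta>*r)))" .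
    have T1: "(\<lambda>\<nu>. g \<nu> l) summable_on ?S" if "l \<in> ?S" for l
      by (rule tonelli_real(1)[where A="?S" and B="?S" and g=g]) (use nn fib out that in auto)
    have T2: "(\<lambda>l. \<Sum>\<^sub>\<infinity>\<nu>\<in>?S. g \<nu> l) summable_on ?S"
      by (rule tonelli_real(2)[where A="?S" and B="?S" and g=g]) (use nn fib out in auto)
    have T3: "(\<Sum>\<^sub>\<infinity>l\<in>?S. \<Sum>\<^sub>\<infinity>\<nu>\<in>?S. g \<nu> l) = (\<Sum>\<^sub>\<infinity>\<nu>\<in>?S. infsum (g \<nu>) ?S)"
      by (rule tonelli_real(3)[where A="?S" and B="?S" and g=g]) (use nn fib out in auto)
    have pw: "norm (skew (2*k) l \<kappa> (as@[x])) * taur l B \<le> (\<Sum>\<^sub>\<infinity>\<nu>\<in>?S. g \<nu> l)" if l: "l \<in> ?S" for l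
    proof -
      have tp: "0 < taur l B" using B by (rule taur_pos)
      have s1: "(\<lambda>\<nu>. g \<nu> l) summable_on ?S" using T1[OF l] .
      have "(\<lambda>\<nu>. (sk1r \<nu> \<kappa> r * norm (skew (2*k) l \<nu> as)) * taur l B) summable_on ?S"
        using s1 by (simp add: g_def mult_ac)
      then have s2: "(\<lambda>\<nu>. sk1r \<nu> \<kappa> r * norm (skew (2*k) l \<nu> as)) summable_on ?S"
        using summable_on_cmult_left'[where c="taur l B" and f="\<lambda>\<nu>. sk1r \<nu> \<kappa> r * norm (skew (2*k) l \<nu> as)" and A="?S"] tp by simp
      have bd: "norm (skew (2*k) l \<nu> as * skew1 \<nu> \<kappa> x) \<le> sk1r \<nu> \<kappa> r * norm (skew (2*k) l \<nu> as)" for \<nu>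
        unfolding norm_mult norm_skew1 mult.commute[of "norm (skew (2*k) l \<nu> as)"]
        by (rule mult_right_mono[OF sk1r_mono]) (use xr in auto)
      have s3: "(\<lambda>\<nu>. norm (skew (2*k) l \<nu> as * skew1 \<nu> \<kappa> x)) summable_on ?S"
        by (rule Infinite_Sum.abs_summable_on_comparison_test'[OF s2]) (use bd in auto)
      have "norm (skew (2*k) l \<kappa> (as@[x])) = norm (\<Sum>\<^sub>\<infinity>\<nu>\<in>?S. skew (2*k) l \<nu> as * skew1 \<nu> \<kappa> x)"
        by (simp add: skew_snoc)
      also have "\<dots> \<le> (\<Sum>\<^sub>\<infinity>\<nu>\<in>?S. norm (skew (2*k) l \<nu> as * skew1 \<nu> \<kappa> x))"
        by (rule norm_infsum_bound[OF s3])
      also have "\<dots> \<le> (\<Sum>\<^sub>\<infinity>\<nu>\<in>?S. sk1r \<nu> \<kappa> r * norm (skew (2*k) l \<nu> as))"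
        by (rule infsum_mono[OF s3 s2]) (use bd in auto)
      finally have "norm (skew (2*k) l \<kappa> (as@[x])) * taur l B \<le>
          (\<Sum>\<^sub>\<infinity>\<nu>\<in>?S. sk1r \<nu> \<kappa> r * norm (skew (2*k) l \<nu> as)) * taur l B"
        by (rule mult_right_mono) (use tp in simp)
      also have "\<dots> = (\<Sum>\<^sub>\<infinity>\<nu>\<in>?S. sk1r \<nu> \<kappa> r * norm (skew (2*k) l \<nu> as) * taur l B)"
        by (rule infsum_cmult_left'[symmetric])
      also have "\<dots> = (\<Sum>\<^sub>\<infinity>\<nu>\<in>?S. g \<nu> l)" by (simp add: g_def mult_ac)
      finally show ?thesis .
    qed
    have summ: "(\<lambda>l. norm (skew (2*k) l \<kappa> (as@[x])) * taur l B) summable_on ?S"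
      by (rule summable_on_comparison_test[OF T2 pw]) (use B in \<open>auto intro!: mult_nonneg_nonneg taur_nonneg\<close>)
    show "(\<lambda>l. norm (skew (2*k) l \<kappa> (as@[x])) * taur l B) summable_on ?S" by (rule summ)
    have "(\<Sum>\<^sub>\<infinity>l\<in>?S. norm (skew (2*k) l \<kappa> (as@[x])) * taur l B) \<le> (\<Sum>\<^sub>\<infinity>l\<in>?S. \<Sum>\<^sub>\<infinity>\<nu>\<in>?S. g \<nu> l)"
      by (rule infsum_mono[OF summ T2 pw])
    also have "\<dots> = (\<Sum>\<^sub>\<infinity>\<nu>\<in>?S. infsum (g \<nu>) ?S)" by (rule T3)
    also have "\<dots> \<le> C1 * (K1 * taur \<kappa> (max B2 (\<theta>*r)))" by (rule outv)
    also have "\<dots> = C1 * K1 * taur \<kappa> (Fw \<theta> rs B)" by (simp add: rs Fw_snoc2 B2_def)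
    finally show "(\<Sum>\<^sub>\<infinity>l\<in>?S. norm (skew (2*k) l \<kappa> (as@[x])) * taur l B) \<le> C1 * K1 * taur \<kappa> (Fw \<theta> rs B)" .
  qed
qed



definition cyc :: "nat \<Rightarrow> int list \<Rightarrow> int list \<Rightarrow> int list" where
  "cyc n w l = map (\<lambda>i. if i = 0 then w!0 - l!(n-1) else w!i - l!(i-1)) [0..<n]"

definition cycinv :: "nat \<Rightarrow> int list \<Rightarrow> int list \<Rightarrow> int list" where
  "cycinv n w p = map (\<lambda>j. if j = n-1 then w!0 - p!0 else w!(j+1) - p!(j+1)) [0..<n]"

lemma cyc_len[simp]: "length (cyc n w l) = n" by (simp add: cyc_def)
lemma cycinv_len[simp]: "length (cycinv n w l) = n" by (simp add: cycinv_def)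

lemma cyc_nth: "i < n \<Longrightarrow> cyc n w l ! i = (if i = 0 then w!0 - l!(n-1) else w!i - l!(i-1))"
  by (simp add: cyc_def)
lemma cycinv_nth: "j < n \<Longrightarrow> cycinv n w p ! j = (if j = n-1 then w!0 - p!0 else w!(j+1) - p!(j+1))"
  by (simp add: cycinv_def)

lemma cycinv_cyc: assumes "length l = n" "n \<ge> 1" shows "cycinv n w (cyc n w l) = l"
proof (rule nth_equalityI)
  show "length (cycinv n w (cyc n w l)) = length l" using assms by simp
  fix j assume "j < length (cycinv n w (cyc n w l))"
  then have j: "j < n" by simp
  show "cycinv n w (cyc n w l) ! j = l ! j"
    using j assms by (auto simp: cycinv_nth cyc_nth)
qed

lemma cyc_cycinv: assumes "length p = n" "n \<ge> 1" shows "cyc n w (cycinv n w p) = p"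
proof (rule nth_equalityI)
  show "length (cyc n w (cycinv n w p)) = length p" using assms by simp
  fix i assume "i < length (cyc n w (cycinv n w p))"
  then have i: "i < n" by simp
  show "cyc n w (cycinv n w p) ! i = p ! i"
    using i assms by (auto simp: cycinv_nth cyc_nth)
qed

lemma shift_sum: "(\<Sum>i<Suc m. (if i = 0 then f m else f (i-1))) = (\<Sum>i<Suc m. f i)"
  for f :: "nat \<Rightarrow> int"
proof -
  have "(\<Sum>i<Suc m. (if i = 0 then f m else f (i-1))) = f m + (\<Sum>i<m. f i)"
    by (simp only: sum.lessThan_Suc_shift) simp
  also have "\<dots> = (\<Sum>i<Suc m. f i)" by (simp add: add.commute)
  finally show ?thesis .
qed

lemma shift_alt: fixes f :: "nat \<Rightarrow> int" assumes "odd m"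
  shows "(\<Sum>i<Suc m. (-1)^i * (if i = 0 then f m else f (i-1))) = - (\<Sum>i<Suc m. (-1)^i * f i)"
proof -
  have "(\<Sum>i<Suc m. (-1)^i * (if i = 0 then f m else f (i-1))) = f m + (\<Sum>i<m. (-1)^Suc i * f i)"
    by (simp add: sum.lessThan_Suc_shift del: sum.lessThan_Suc)
  also have "\<dots> = f m - (\<Sum>i<m. (-1)^i * f i)" by (simp add: sum_negf)
  also have "\<dots> = - (\<Sum>i<Suc m. (-1)^i * f i)" using assms by simp
  finally show ?thesis .
qed

definition lsum :: "nat \<Rightarrow> int list \<Rightarrow> int" where "lsum n l = (\<Sum>i<n. l!i)"

lemma skew_size_lsum: "length lam = n \<Longrightarrow> skew_size lam mu = lsum n lam - lsum n mu"
  by (simp add: skew_size_def lsum_def sum_subtractf)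

lemma alt_len: "length l = n \<Longrightarrow> alt l = (\<Sum>i<n. (-1)^i * l!i)"
  by (simp add: alt_def)

lemma lsum_cyc: shows "lsum (Suc m) (cyc (Suc m) w l) = lsum (Suc m) w - lsum (Suc m) l"
proof -
  have "lsum (Suc m) (cyc (Suc m) w l) = (\<Sum>i<Suc m. w!i - (if i = 0 then l!m else l!(i-1)))"
    unfolding lsum_def by (rule sum.cong) (auto simp: cyc_nth)
  also have "\<dots> = lsum (Suc m) w - (\<Sum>i<Suc m. (if i = 0 then l!m else l!(i-1)))"
    by (simp add: lsum_def sum_subtractf del: sum.lessThan_Suc)
  also have "\<dots> = lsum (Suc m) w - lsum (Suc m) l" by (simp add: shift_sum lsum_def del: sum.lessThan_Suc)
  finally show ?thesis .
qed

lemma alt_cyc: assumes "odd m" "length w = Suc m" and that: "length l = Suc m"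
  shows "alt (cyc (Suc m) w l) = alt w + alt l"
proof -
  have "alt (cyc (Suc m) w l) = (\<Sum>i<Suc m. (-1)^i * w!i - (-1)^i * (if i = 0 then l!m else l!(i-1)))"
    unfolding alt_len[OF cyc_len] by (rule sum.cong) (auto simp: cyc_nth algebra_simps)
  also have "\<dots> = alt w - (\<Sum>i<Suc m. (-1)^i * (if i = 0 then l!m else l!(i-1)))"
    by (simp add: sum_subtractf assms alt_len del: sum.lessThan_Suc)
  also have "\<dots> = alt w + alt l" using shift_alt[OF assms(1), of "\<lambda>i. l!i"] that assms by (simp add: alt_len del: sum.lessThan_Suc)
  finally show ?thesis .
qed

definition wv :: "nat \<Rightarrow> int list \<Rightarrow> int list \<Rightarrow> int list" where
  "wv n u v = map (\<lambda>i. if i = 0 then u!0 + v!(n-1) else u!i + v!(i-1)) [0..<n]"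

lemma wv_len[simp]: "length (wv n u v) = n" by (simp add: wv_def)
lemma wv_nth: "i < n \<Longrightarrow> wv n u v ! i = (if i = 0 then u!0 + v!(n-1) else u!i + v!(i-1))"
  by (simp add: wv_def)

lemma lsum_wv: shows "lsum (Suc m) (wv (Suc m) u v) = lsum (Suc m) u + lsum (Suc m) v"
proof -
  have "lsum (Suc m) (wv (Suc m) u v) = (\<Sum>i<Suc m. u!i + (if i = 0 then v!m else v!(i-1)))"
    unfolding lsum_def by (rule sum.cong) (auto simp: wv_nth)
  also have "\<dots> = lsum (Suc m) u + (\<Sum>i<Suc m. (if i = 0 then v!m else v!(i-1)))"
    by (simp add: lsum_def sum.distrib del: sum.lessThan_Suc)
  also have "\<dots> = lsum (Suc m) u + lsum (Suc m) v" by (simp add: shift_sum lsum_def del: sum.lessThan_Suc)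
  finally show ?thesis .
qed

lemma alt_wv: assumes "odd m" "length u = Suc m" "length v = Suc m"
  shows "alt (wv (Suc m) u v) = alt u - alt v"
proof -
  have "alt (wv (Suc m) u v) = (\<Sum>i<Suc m. (-1)^i * u!i + (-1)^i * (if i = 0 then v!m else v!(i-1)))"
    unfolding alt_len[OF wv_len] by (rule sum.cong) (auto simp: wv_nth algebra_simps)
  also have "\<dots> = alt u + (\<Sum>i<Suc m. (-1)^i * (if i = 0 then v!m else v!(i-1)))"
    by (simp add: sum.distrib assms alt_len del: sum.lessThan_Suc)
  also have "\<dots> = alt u - alt v" using shift_alt[OF assms(1), of "\<lambda>i. v!i"] assms by (simp add: alt_len del: sum.lessThan_Suc)
  finally show ?thesis .
qed


lemma interlace_Sign_lo: assumes "\<kappa> \<in> Sign n" "interlace l \<kappa>" shows "l \<in> Sign n"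
proof -
  have "length l = n" using assms by (simp add: interlace_def Sign_iff)
  moreover have "l ! Suc i \<le> l ! i" if "Suc i < n" for i
  proof -
    have "l ! Suc i \<le> \<kappa> ! Suc i" using assms that by (simp add: interlace_def Sign_iff)
    also have "\<kappa> ! Suc i \<le> l ! i" using assms that by (simp add: interlace_def Sign_iff)
    finally show ?thesis .
  qed
  ultimately show ?thesis by (simp add: Sign_iff)
qed

lemma interlace_Sign_hi: assumes "\<kappa> \<in> Sign n" "interlace \<kappa> p" shows "p \<in> Sign n"
proof -
  have "length p = n" using assms by (simp add: interlace_def Sign_iff)
  moreover have "p ! Suc i \<le> p ! i" if "Suc i < n" for i
  proof -
    have "p ! Suc i \<le> \<kappa> ! i" using assms that by (simp add: interlace_def Sign_iff)
    also have "\<kappa> ! i \<le> p ! i" using assms that by (simp add: interlace_def Sign_iff)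
    finally show ?thesis .
  qed
  ultimately show ?thesis by (simp add: Sign_iff)
qed


lemma I1:
  fixes a c :: complex
  assumes k: "1 \<le> k" and \<kappa>: "\<kappa> \<in> Sign (2*k)"
  shows "(\<Sum>\<^sub>\<infinity>l\<in>Sign (2*k). skew1 \<kappa> l a * tau l c) = (\<Sum>\<^sub>\<infinity>p\<in>Sign (2*k). skew1 p \<kappa> a * tau p c)"
proof -
  define m where "m = 2*k - 1"
  have n: "2*k = Suc m" and om: "odd m" using k by (auto simp: m_def)
  have \<kappa>': "\<kappa> \<in> Sign (Suc m)" using \<kappa> n by simp
  have lk: "length \<kappa> = Suc m" using \<kappa>' by (simp add: Sign_iff)
  define w where "w = wv (Suc m) \<kappa> \<kappa>"
  have lw: "length w = Suc m" by (simp add: w_def)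
  have aw: "alt w = 0" unfolding w_def using alt_wv[OF om lk lk] by simp
  have sw: "lsum (Suc m) w = 2 * lsum (Suc m) \<kappa>" unfolding w_def lsum_wv by simp
  have w0: "w!0 = \<kappa>!0 + \<kappa>!m" by (simp add: w_def wv_nth)
  have wi: "w!i = \<kappa>!i + \<kappa>!(i-1)" if "0 < i" "i < Suc m" for i using that by (simp add: w_def wv_nth)
  define T1 where "T1 = {l. length l = Suc m \<and> interlace l \<kappa>}"
  define T2 where "T2 = {p. length p = Suc m \<and> interlace \<kappa> p}"
  define f where "f l = skew1 \<kappa> l a * tau l c" for l
  define g where "g p = skew1 p \<kappa> a * tau p c" for p
  have T1S: "x \<in> Sign (Suc m)" if "x \<in> T1" for x using interlace_Sign_lo[OF \<kappa>'] that by (auto simp: T1_def)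
  have T2S: "x \<in> Sign (Suc m)" if "x \<in> T2" for x using interlace_Sign_hi[OF \<kappa>'] that by (auto simp: T2_def)
  have e1: "(\<Sum>\<^sub>\<infinity>l\<in>Sign (Suc m). f l) = infsum f T1"
  proof (rule infsum_cong_neutral)
    fix x assume "x \<in> Sign (Suc m) - T1" then show "f x = 0" by (auto simp: T1_def f_def skew1_def Sign_iff)
  qed (use T1S in auto)
  have e2: "(\<Sum>\<^sub>\<infinity>p\<in>Sign (Suc m). g p) = infsum g T2"
  proof (rule infsum_cong_neutral)
    fix x assume "x \<in> Sign (Suc m) - T2" then show "g x = 0" by (auto simp: T2_def g_def skew1_def Sign_iff)
  qed (use T2S in auto)
  have fw: "interlace \<kappa> (cyc (Suc m) w l)" if l: "l \<in> T1" for l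
  proof -
    have il: "interlace l \<kappa>" and ll: "length l = Suc m" using l by (auto simp: T1_def)
    have A: "\<And>i. i < Suc m \<Longrightarrow> l!i \<le> \<kappa>!i" using il lk by (simp add: interlace_def)
    have Bq: "\<And>i. Suc i < Suc m \<Longrightarrow> \<kappa>!Suc i \<le> l!i" using il lk by (simp add: interlace_def)
    show ?thesis unfolding interlace_def
    proof (intro conjI allI impI)
      show "length \<kappa> = length (cyc (Suc m) w l)" using lk by simp
      fix i assume i: "i < length (cyc (Suc m) w l)"
      then have i': "i < Suc m" by simp
      show "\<kappa>!i \<le> cyc (Suc m) w l ! i"
      proof (cases i)
        case 0 then show ?thesis using A[of m] by (simp add: cyc_nth w0)
      next
        case (Suc j) then show ?thesis using A[of j] i' wi[of i] by (simp add: cyc_nth)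
      qed
    next
      fix i assume i: "Suc i < length (cyc (Suc m) w l)"
      then show "cyc (Suc m) w l ! Suc i \<le> \<kappa>!i" using Bq[of i] wi[of "Suc i"] by (simp add: cyc_nth)
    qed
  qed
  have gw: "interlace (cycinv (Suc m) w p) \<kappa>" if p: "p \<in> T2" for p
  proof -
    have ip: "interlace \<kappa> p" and lp: "length p = Suc m" using p by (auto simp: T2_def)
    have A: "\<And>i. i < Suc m \<Longrightarrow> \<kappa>!i \<le> p!i" using ip lp by (simp add: interlace_def)
    have Bq: "\<And>i. Suc i < Suc m \<Longrightarrow> p!Suc i \<le> \<kappa>!i" using ip lp by (simp add: interlace_def)
    show ?thesis unfolding interlace_def
    proof (intro conjI allI impI)
      show "length (cycinv (Suc m) w p) = length \<kappa>" using lk by simp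
      fix j assume j: "j < length \<kappa>"
      then have j': "j < Suc m" using lk by simp
      show "cycinv (Suc m) w p ! j \<le> \<kappa>!j"
      proof (cases "j = m")
        case True then show ?thesis using A[of 0] by (simp add: cycinv_nth w0)
      next
        case False then show ?thesis using A[of "Suc j"] j' wi[of "Suc j"] by (simp add: cycinv_nth)
      qed
    next
      fix j assume j: "Suc j < length \<kappa>"
      then show "\<kappa>!Suc j \<le> cycinv (Suc m) w p ! j" using Bq[of j] wi[of "Suc j"] lk by (simp add: cycinv_nth)
    qed
  qed
  have main: "infsum f T1 = infsum g T2"
  proof (rule infsum_reindex_bij_witness[where i="cycinv (Suc m) w" and j="cyc (Suc m) w"])
    fix l assume l: "l \<in> T1"
    then have ll: "length l = Suc m" by (simp add: T1_def)
    show "cycinv (Suc m) w (cyc (Suc m) w l) = l" by (rule cycinv_cyc[OF ll]) simp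
    show "cyc (Suc m) w l \<in> T2" using fw[OF l] by (simp add: T2_def)
    have il: "interlace l \<kappa>" using l by (simp add: T1_def)
    have ss: "skew_size (cyc (Suc m) w l) \<kappa> = skew_size \<kappa> l"
      using skew_size_lsum[of "cyc (Suc m) w l" "Suc m" \<kappa>] skew_size_lsum[OF lk, of l] lsum_cyc[of m w l] sw
      by simp
    have al: "alt (cyc (Suc m) w l) = alt l" using alt_cyc[OF om lw ll] aw by simp
    show "g (cyc (Suc m) w l) = f l"
      using fw[OF l] il ss al by (simp add: f_def g_def skew1_def tau_alt)
  next
    fix p assume p: "p \<in> T2"
    then have lp: "length p = Suc m" by (simp add: T2_def)
    show "cyc (Suc m) w (cycinv (Suc m) w p) = p" by (rule cyc_cycinv[OF lp]) simp
    show "cycinv (Suc m) w p \<in> T1" using gw[OF p] by (simp add: T1_def)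
  qed
  show ?thesis using e1 e2 main n by (simp add: f_def g_def)
qed


lemma K1:
  fixes a b :: complex
  assumes k: "1 \<le> k" and \<kappa>: "\<kappa> \<in> Sign (2*k)" and \<pi>: "\<pi> \<in> Sign (2*k)"
  shows "(\<Sum>\<^sub>\<infinity>\<nu>\<in>Sign (2*k). skew1 \<kappa> \<nu> a * skew1 \<pi> \<nu> b) = (\<Sum>\<^sub>\<infinity>\<zeta>\<in>Sign (2*k). skew1 \<zeta> \<kappa> b * skew1 \<zeta> \<pi> a)"
proof -
  define m where "m = 2*k - 1"
  have n: "2*k = Suc m" and om: "odd m" using k by (auto simp: m_def)
  have \<kappa>': "\<kappa> \<in> Sign (Suc m)" using \<kappa> n by simp
  have \<pi>': "\<pi> \<in> Sign (Suc m)" using \<pi> n by simp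
  have lk: "length \<kappa> = Suc m" using \<kappa>' by (simp add: Sign_iff)
  have lpi: "length \<pi> = Suc m" using \<pi>' by (simp add: Sign_iff)
  define Mx where "Mx = map (\<lambda>i. max (\<kappa>!i) (\<pi>!i)) [0..<Suc m]"
  define Mn where "Mn = map (\<lambda>i. min (\<kappa>!i) (\<pi>!i)) [0..<Suc m]"
  have Mxi: "Mx!i = max (\<kappa>!i) (\<pi>!i)" if "i < Suc m" for i using that by (simp add: Mx_def del: upt_Suc)
  have Mni: "Mn!i = min (\<kappa>!i) (\<pi>!i)" if "i < Suc m" for i using that by (simp add: Mn_def del: upt_Suc)
  define w where "w = wv (Suc m) Mx Mn"
  have sw: "lsum (Suc m) w = lsum (Suc m) \<kappa> + lsum (Suc m) \<pi>"
  proof -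
    have "lsum (Suc m) w = lsum (Suc m) Mx + lsum (Suc m) Mn" unfolding w_def by (rule lsum_wv)
    also have "\<dots> = (\<Sum>i<Suc m. Mx!i + Mn!i)" by (simp add: lsum_def sum.distrib del: sum.lessThan_Suc)
    also have "\<dots> = (\<Sum>i<Suc m. \<kappa>!i + \<pi>!i)"
      by (rule sum.cong) (auto simp: Mxi Mni)
    also have "\<dots> = lsum (Suc m) \<kappa> + lsum (Suc m) \<pi>" by (simp add: lsum_def sum.distrib del: sum.lessThan_Suc)
    finally show ?thesis .
  qed
  have w0: "w!0 = max (\<kappa>!0) (\<pi>!0) + min (\<kappa>!m) (\<pi>!m)" by (simp add: w_def wv_nth Mxi Mni)
  have wi: "w!i = max (\<kappa>!i) (\<pi>!i) + min (\<kappa>!(i-1)) (\<pi>!(i-1))" if "0 < i" "i < Suc m" for i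
    using that by (simp add: w_def wv_nth Mxi Mni)
  define T1 where "T1 = {l. length l = Suc m \<and> interlace l \<kappa> \<and> interlace l \<pi>}"
  define T2 where "T2 = {p. length p = Suc m \<and> interlace \<kappa> p \<and> interlace \<pi> p}"
  define f where "f l = skew1 \<kappa> l a * skew1 \<pi> l b" for l
  define g where "g p = skew1 p \<kappa> b * skew1 p \<pi> a" for p
  have T1S: "x \<in> Sign (Suc m)" if "x \<in> T1" for x using interlace_Sign_lo[OF \<kappa>'] that by (auto simp: T1_def)
  have T2S: "x \<in> Sign (Suc m)" if "x \<in> T2" for x using interlace_Sign_hi[OF \<kappa>'] that by (auto simp: T2_def)
  have e1: "(\<Sum>\<^sub>\<infinity>l\<in>Sign (Suc m). f l) = infsum f T1"
  proof (rule infsum_cong_neutral)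
    fix x assume "x \<in> Sign (Suc m) - T1" then show "f x = 0" by (auto simp: T1_def f_def skew1_def Sign_iff)
  qed (use T1S in auto)
  have e2: "(\<Sum>\<^sub>\<infinity>p\<in>Sign (Suc m). g p) = infsum g T2"
  proof (rule infsum_cong_neutral)
    fix x assume "x \<in> Sign (Suc m) - T2" then show "g x = 0" by (auto simp: T2_def g_def skew1_def Sign_iff)
  qed (use T2S in auto)
  have fw: "interlace \<kappa> (cyc (Suc m) w l) \<and> interlace \<pi> (cyc (Suc m) w l)" if l: "l \<in> T1" for l
  proof -
    have il: "interlace l \<kappa>" and il2: "interlace l \<pi>" and ll: "length l = Suc m" using l by (auto simp: T1_def)
    have A: "\<And>i. i < Suc m \<Longrightarrow> l!i \<le> \<kappa>!i" using il lk by (simp add: interlace_def)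
    have Bq: "\<And>i. Suc i < Suc m \<Longrightarrow> \<kappa>!Suc i \<le> l!i" using il lk by (simp add: interlace_def)
    have A2: "\<And>i. i < Suc m \<Longrightarrow> l!i \<le> \<pi>!i" using il2 lpi by (simp add: interlace_def)
    have Bq2: "\<And>i. Suc i < Suc m \<Longrightarrow> \<pi>!Suc i \<le> l!i" using il2 lpi by (simp add: interlace_def)
    have lo: "max (\<kappa>!i) (\<pi>!i) \<le> cyc (Suc m) w l ! i" if i: "i < Suc m" for i
    proof (cases i)
      case 0 then show ?thesis using A[of m] A2[of m] by (simp add: cyc_nth w0 min_def max_def)
    next
      case (Suc j) then show ?thesis using A[of j] A2[of j] i wi[of i] by (simp add: cyc_nth min_def max_def)
    qed
    have hi: "cyc (Suc m) w l ! Suc i \<le> min (\<kappa>!i) (\<pi>!i)" if i: "Suc i < Suc m" for i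
      using Bq[OF i] Bq2[OF i] wi[of "Suc i"] i by (simp add: cyc_nth min_def max_def)
    show ?thesis unfolding interlace_def using lk lpi lo hi by auto
  qed
  have gw: "interlace (cycinv (Suc m) w p) \<kappa> \<and> interlace (cycinv (Suc m) w p) \<pi>" if p: "p \<in> T2" for p
  proof -
    have ip: "interlace \<kappa> p" and ip2: "interlace \<pi> p" and lp: "length p = Suc m" using p by (auto simp: T2_def)
    have A: "\<And>i. i < Suc m \<Longrightarrow> \<kappa>!i \<le> p!i" using ip lp by (simp add: interlace_def)
    have Bq: "\<And>i. Suc i < Suc m \<Longrightarrow> p!Suc i \<le> \<kappa>!i" using ip lp by (simp add: interlace_def)
    have A2: "\<And>i. i < Suc m \<Longrightarrow> \<pi>!i \<le> p!i" using ip2 lp by (simp add: interlace_def)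
    have Bq2: "\<And>i. Suc i < Suc m \<Longrightarrow> p!Suc i \<le> \<pi>!i" using ip2 lp by (simp add: interlace_def)
    have hi: "cycinv (Suc m) w p ! j \<le> min (\<kappa>!j) (\<pi>!j)" if j: "j < Suc m" for j
    proof (cases "j = m")
      case True then show ?thesis using A[of 0] A2[of 0] by (simp add: cycinv_nth w0 min_def max_def)
    next
      case False then show ?thesis using A[of "Suc j"] A2[of "Suc j"] j wi[of "Suc j"] by (simp add: cycinv_nth min_def max_def)
    qed
    have lo: "max (\<kappa>!Suc j) (\<pi>!Suc j) \<le> cycinv (Suc m) w p ! j" if j: "Suc j < Suc m" for j
      using Bq[OF j] Bq2[OF j] wi[of "Suc j"] j by (simp add: cycinv_nth min_def max_def)
    show ?thesis unfolding interlace_def using lk lpi lo hi by auto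
  qed
  have main: "infsum f T1 = infsum g T2"
  proof (rule infsum_reindex_bij_witness[where i="cycinv (Suc m) w" and j="cyc (Suc m) w"])
    fix l assume l: "l \<in> T1"
    then have ll: "length l = Suc m" by (simp add: T1_def)
    show "cycinv (Suc m) w (cyc (Suc m) w l) = l" by (rule cycinv_cyc[OF ll]) simp
    show "cyc (Suc m) w l \<in> T2" using fw[OF l] by (simp add: T2_def)
    have il: "interlace l \<kappa>" "interlace l \<pi>" using l by (auto simp: T1_def)
    have lc: "lsum (Suc m) (cyc (Suc m) w l) = lsum (Suc m) \<kappa> + lsum (Suc m) \<pi> - lsum (Suc m) l"
      using lsum_cyc[of m w l] sw by simp
    have ss1: "skew_size (cyc (Suc m) w l) \<kappa> = skew_size \<pi> l"
      using skew_size_lsum[of "cyc (Suc m) w l" "Suc m" \<kappa>] skew_size_lsum[OF lpi, of l] lc by simp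
    have ss2: "skew_size (cyc (Suc m) w l) \<pi> = skew_size \<kappa> l"
      using skew_size_lsum[of "cyc (Suc m) w l" "Suc m" \<pi>] skew_size_lsum[OF lk, of l] lc by simp
    show "g (cyc (Suc m) w l) = f l"
      using fw[OF l] il ss1 ss2 by (simp add: f_def g_def skew1_def mult.commute)
  next
    fix p assume p: "p \<in> T2"
    then have lp: "length p = Suc m" by (simp add: T2_def)
    show "cyc (Suc m) w (cycinv (Suc m) w p) = p" by (rule cyc_cycinv[OF lp]) simp
    show "cycinv (Suc m) w p \<in> T1" using gw[OF p] by (simp add: T1_def)
  qed
  show ?thesis using e1 e2 main n by (simp add: f_def g_def)
qed



lemma fubini_bound2:
  fixes F :: "'a \<Rightarrow> 'b \<Rightarrow> complex" and P W :: "'a \<Rightarrow> real" and Q :: "'a \<Rightarrow> 'b \<Rightarrow> real"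
  assumes nb: "\<And>x y. x\<in>A \<Longrightarrow> y\<in>B \<Longrightarrow> norm (F x y) \<le> P x * Q x y"
    and P0: "\<And>x. x\<in>A \<Longrightarrow> 0 \<le> P x"
    and Qs: "\<And>x. x\<in>A \<Longrightarrow> Q x summable_on B"
    and Qb: "\<And>x. x\<in>A \<Longrightarrow> infsum (Q x) B \<le> W x"
    and Ws: "(\<lambda>x. P x * W x) summable_on A"
  shows "infsum (\<lambda>x. infsum (F x) B) A = infsum (\<lambda>y. infsum (\<lambda>x. F x y) A) B"
proof (rule fubini_abs)
  fix x assume x: "x \<in> A"
  have s: "(\<lambda>y. P x * Q x y) summable_on B" using Qs[OF x] by (rule summable_on_cmult_right)
  show "(\<lambda>y. norm (F x y)) summable_on B"
    by (rule Infinite_Sum.abs_summable_on_comparison_test'[OF s]) (use nb x in auto)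
next
  have fib: "(\<lambda>y. norm (F x y)) summable_on B" if x: "x \<in> A" for x
  proof -
    have s: "(\<lambda>y. P x * Q x y) summable_on B" using Qs[OF x] by (rule summable_on_cmult_right)
    show ?thesis by (rule Infinite_Sum.abs_summable_on_comparison_test'[OF s]) (use nb x in auto)
  qed
  have bd: "(\<Sum>\<^sub>\<infinity>y\<in>B. norm (F x y)) \<le> P x * W x" if x: "x \<in> A" for x
  proof -
    have s: "(\<lambda>y. P x * Q x y) summable_on B" using Qs[OF x] by (rule summable_on_cmult_right)
    have "(\<Sum>\<^sub>\<infinity>y\<in>B. norm (F x y)) \<le> (\<Sum>\<^sub>\<infinity>y\<in>B. P x * Q x y)"
      by (rule infsum_mono[OF fib[OF x] s]) (use nb x in auto)
    also have "\<dots> = P x * infsum (Q x) B" by (rule infsum_cmult_right')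
    also have "\<dots> \<le> P x * W x" by (rule mult_left_mono[OF Qb[OF x] P0[OF x]])
    finally show ?thesis .
  qed
  show "(\<lambda>x. \<Sum>\<^sub>\<infinity>y\<in>B. norm (F x y)) summable_on A"
    by (rule summable_on_comparison_test[OF Ws]) (use bd in \<open>auto intro: infsum_nonneg\<close>)
qed


lemma sum_scale:
  fixes f g :: "'a \<Rightarrow> real"
  assumes "f summable_on A" "\<And>x. x\<in>A \<Longrightarrow> g x = c * f x"
  shows "g summable_on A" "infsum g A = c * infsum f A"
proof -
  have "(\<lambda>x. c * f x) summable_on A" using assms(1) by (rule summable_on_cmult_right)
  then show "g summable_on A" using assms(2) summable_on_cong by metis
  have "infsum g A = infsum (\<lambda>x. c * f x) A" by (rule infsum_cong) (use assms(2) in auto)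
  also have "\<dots> = c * infsum f A" by (rule infsum_cmult_right')
  finally show "infsum g A = c * infsum f A" .
qed

lemma nb3:
  fixes p q u v w :: real
  assumes "0 \<le> p" "p \<le> u" "0 \<le> q" "q \<le> v" "0 \<le> u"
  shows "p * q \<le> u * v"
  using assms by (intro mult_mono) auto

lemma KC:
  fixes x :: complex
  assumes k: "1 \<le> k" and th: "1 < \<theta>" and rx: "0 < rx" and xr: "norm x \<le> rx"
    and g: "good \<theta> (\<theta>*rx) as rs"
  shows "\<forall>\<kappa>\<in>Sign (2*k). \<forall>\<pi>\<in>Sign (2*k).
    (\<Sum>\<^sub>\<infinity>\<nu>\<in>Sign (2*k). skew (2*k) \<kappa> \<nu> as * skew1 \<pi> \<nu> x) =
    (\<Sum>\<^sub>\<infinity>\<mu>\<in>Sign (2*k). skew1 \<mu> \<kappa> x * skew (2*k) \<mu> \<pi> as)"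
  using g
proof (induction as arbitrary: rs rule: rev_induct)
  case Nil
  show ?case
  proof (intro ballI)
    fix \<kappa> \<pi> assume \<kappa>: "\<kappa> \<in> Sign (2*k)" and \<pi>: "\<pi> \<in> Sign (2*k)"
    have "(\<Sum>\<^sub>\<infinity>\<nu>\<in>Sign (2*k). skew (2*k) \<kappa> \<nu> [] * skew1 \<pi> \<nu> x) =
          (\<Sum>\<^sub>\<infinity>\<nu>\<in>Sign (2*k). if \<nu> = \<kappa> then skew1 \<pi> \<kappa> x else 0)"
      by (rule infsum_cong) (auto simp: skew_Nil)
    also have "\<dots> = skew1 \<pi> \<kappa> x" by (rule infsumI[OF has_sum_single[OF \<kappa>]])
    also have "\<dots> = (\<Sum>\<^sub>\<infinity>\<mu>\<in>Sign (2*k). if \<mu> = \<pi> then skew1 \<pi> \<kappa> x else 0)"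
      by (rule infsumI[OF has_sum_single[OF \<pi>], symmetric])
    also have "\<dots> = (\<Sum>\<^sub>\<infinity>\<mu>\<in>Sign (2*k). skew1 \<mu> \<kappa> x * skew (2*k) \<mu> \<pi> [])"
      by (rule infsum_cong) (auto simp: skew_Nil)
    finally show "(\<Sum>\<^sub>\<infinity>\<nu>\<in>Sign (2*k). skew (2*k) \<kappa> \<nu> [] * skew1 \<pi> \<nu> x) =
          (\<Sum>\<^sub>\<infinity>\<mu>\<in>Sign (2*k). skew1 \<mu> \<kappa> x * skew (2*k) \<mu> \<pi> [])" .
  qed
next
  case (snoc y as)
  from snoc.prems obtain rs0 ry where rs: "rs = rs0@[ry]" and g0: "good \<theta> (\<theta>*rx) as rs0"
    and yr: "norm y \<le> ry" and ry: "0 < ry" and ryx: "\<theta>*ry*(\<theta>*rx) \<le> 1"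
    and pr: "\<forall>r'\<in>set rs0. \<theta>*\<theta>*r'*ry \<le> 1"
    by (rule good_snoc)
  note IH = snoc.IH[OF g0]
  let ?S = "Sign (2*k)"
  define Bb where "Bb = max (\<theta>*rx) (\<theta>*ry)"
  have gb: "good \<theta> Bb as rs0" unfolding Bb_def by (rule good_max[OF g0 pr]) (use th in simp)
  define B1 where "B1 = max rx (\<theta>*ry)"
  define B2 where "B2 = max ry (\<theta>*rx)"
  have tx: "rx \<le> \<theta>*rx" using th rx by simp
  have ty: "ry \<le> \<theta>*ry" using th ry by simp
  have b1: "B1 \<le> Bb" unfolding B1_def Bb_def
    by (rule max.boundedI[OF max.coboundedI1[OF tx] max.cobounded2])
  have b2: "B2 \<le> Bb" unfolding B2_def Bb_def
    by (rule max.boundedI[OF max.coboundedI2[OF ty] max.cobounded1])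
  have gB1: "good \<theta> B1 as rs0" by (rule good_mono[OF gb _ b1]) (use th rx in \<open>auto simp: B1_def\<close>)
  have gB2: "good \<theta> B2 as rs0" by (rule good_mono[OF gb _ b2]) (use th ry in \<open>auto simp: B2_def\<close>)
  have gx: "good \<theta> rx as rs0" by (rule good_mono[OF g0]) (use th rx tx in auto)
  have c1: "\<theta>*ry*rx \<le> 1"
  proof -
    have "\<theta>*ry*rx \<le> \<theta>*ry*(\<theta>*rx)" by (rule mult_left_mono[OF tx]) (use th ry in simp)
    then show ?thesis using ryx by simp
  qed
  have c2: "\<theta>*rx*ry \<le> 1" using c1 by (simp add: mult_ac)
  have B1p: "0 < B1" using rx by (simp add: B1_def)
  have B2p: "0 < B2" using ry by (simp add: B2_def)
  obtain CD1 where CD1: "\<forall>\<kappa>\<in>?S. (\<lambda>l. norm (skew (2*k) \<kappa> l as) * taur l B1) summable_on ?S \<and>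
     (\<Sum>\<^sub>\<infinity>l\<in>?S. norm (skew (2*k) \<kappa> l as) * taur l B1) \<le> CD1 * taur \<kappa> (Fw \<theta> rs0 B1)"
    using M3D[OF th B1p gB1] by blast
  obtain CD2 where CD2: "\<forall>\<kappa>\<in>?S. (\<lambda>l. norm (skew (2*k) \<kappa> l as) * taur l B2) summable_on ?S \<and>
     (\<Sum>\<^sub>\<infinity>l\<in>?S. norm (skew (2*k) \<kappa> l as) * taur l B2) \<le> CD2 * taur \<kappa> (Fw \<theta> rs0 B2)"
    using M3D[OF th B2p gB2] by blast
  obtain CU where CU0: "CU \<ge> 0" and CU: "\<forall>\<kappa>\<in>?S. (\<lambda>l. norm (skew (2*k) l \<kappa> as) * taur l rx) summable_on ?S \<and>
     (\<Sum>\<^sub>\<infinity>l\<in>?S. norm (skew (2*k) l \<kappa> as) * taur l rx) \<le> CU * taur \<kappa> (Fw \<theta> rs0 rx)"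
    using M3U[OF th rx gx] by blast
  define Fx where "Fx = Fw \<theta> rs0 rx"
  have Fx0: "0 \<le> Fx" using Fw_ge[of rx \<theta> rs0] rx by (simp add: Fx_def)
  have cF: "\<theta>*ry*Fx \<le> 1" unfolding Fx_def by (rule good_Fw[OF gx ry _ c1 pr]) (use th in simp)
  define K1 where "K1 = (1/(1-1/\<theta>))^(2*k)"
  have K1nn: "0 \<le> K1" unfolding K1_def by (rule K1_nonneg[OF th])
  show ?case
  proof (intro ballI)
    fix \<kappa> \<pi> assume \<kappa>: "\<kappa> \<in> ?S" and \<pi>: "\<pi> \<in> ?S"
    obtain Cp where Cp0: "Cp \<ge> 0" and Cp: "\<forall>\<nu>\<in>?S. sk1r \<pi> \<nu> rx \<le> Cp * taur \<nu> rx"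
      using M4low[OF rx \<pi>] by blast
    obtain Cp' where Cp'0: "Cp' \<ge> 0" and Cp': "\<forall>\<zeta>\<in>?S. sk1r \<zeta> \<pi> ry \<le> Cp' * taur \<zeta> ry"
      using M4up[OF ry \<pi>] by blast
    obtain Ck where Ck0: "Ck \<ge> 0" and Ck: "\<forall>\<mu>\<in>?S. sk1r \<mu> \<kappa> rx \<le> Ck * taur \<mu> rx"
      using M4up[OF rx \<kappa>] by blast
    have sx: "sk1r a b (norm x) \<le> sk1r a b rx" for a b by (rule sk1r_mono) (use xr in auto)
    have sy: "sk1r a b (norm y) \<le> sk1r a b ry" for a b by (rule sk1r_mono) (use yr in auto)
    have F1: "(\<Sum>\<^sub>\<infinity>\<eta>\<in>?S. \<Sum>\<^sub>\<infinity>\<nu>\<in>?S. skew (2*k) \<kappa> \<eta> as * skew1 \<eta> \<nu> y * skew1 \<pi> \<nu> x) =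
              (\<Sum>\<^sub>\<infinity>\<nu>\<in>?S. \<Sum>\<^sub>\<infinity>\<eta>\<in>?S. skew (2*k) \<kappa> \<eta> as * skew1 \<eta> \<nu> y * skew1 \<pi> \<nu> x)"
    proof (rule fubini_bound2[where P="\<lambda>\<eta>. norm (skew (2*k) \<kappa> \<eta> as)"
          and Q="\<lambda>\<eta> \<nu>. sk1r \<eta> \<nu> ry * (Cp * taur \<nu> rx)" and W="\<lambda>\<eta>. Cp * (K1 * taur \<eta> B1)"])
      fix \<eta> \<nu> assume \<eta>: "\<eta> \<in> ?S" and \<nu>: "\<nu> \<in> ?S"
      have b: "sk1r \<pi> \<nu> (norm x) \<le> Cp * taur \<nu> rx" using sx[of \<pi> \<nu>] Cp \<nu> by force
      have "sk1r \<eta> \<nu> (norm y) * sk1r \<pi> \<nu> (norm x) \<le> sk1r \<eta> \<nu> ry * (Cp * taur \<nu> rx)"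
        by (rule nb3[OF sk1r_nonneg sy sk1r_nonneg b sk1r_nonneg]) (use ry in auto)
      then show "norm (skew (2*k) \<kappa> \<eta> as * skew1 \<eta> \<nu> y * skew1 \<pi> \<nu> x) \<le>
          norm (skew (2*k) \<kappa> \<eta> as) * (sk1r \<eta> \<nu> ry * (Cp * taur \<nu> rx))"
        unfolding norm_mult norm_skew1 mult.assoc by (rule mult_left_mono) simp
    next
      fix \<eta> assume \<eta>: "\<eta> \<in> ?S"
      have m: "(\<lambda>\<nu>. sk1r \<eta> \<nu> ry * taur \<nu> rx) summable_on ?S \<and>
         (\<Sum>\<^sub>\<infinity>\<nu>\<in>?S. sk1r \<eta> \<nu> ry * taur \<nu> rx) \<le> K1 * taur \<eta> B1"
        using M1[OF \<eta> _ _ th c1] rx ry by (simp add: K1_def B1_def)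
      have e: "sk1r \<eta> \<nu> ry * (Cp * taur \<nu> rx) = Cp * (sk1r \<eta> \<nu> ry * taur \<nu> rx)" for \<nu> by (simp add: mult_ac)
      note ss = sum_scale[where f="\<lambda>\<nu>. sk1r \<eta> \<nu> ry * taur \<nu> rx" and c=Cp, OF conjunct1[OF m] e]
      show "(\<lambda>\<nu>. sk1r \<eta> \<nu> ry * (Cp * taur \<nu> rx)) summable_on ?S" by (rule ss(1))
      show "(\<Sum>\<^sub>\<infinity>\<nu>\<in>?S. sk1r \<eta> \<nu> ry * (Cp * taur \<nu> rx)) \<le> Cp * (K1 * taur \<eta> B1)"
        unfolding ss(2) by (rule mult_left_mono) (use m Cp0 in auto)
    next
      have s: "(\<lambda>\<eta>. norm (skew (2*k) \<kappa> \<eta> as) * taur \<eta> B1) summable_on ?S" using CD1 \<kappa> by blast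
      show "(\<lambda>\<eta>. norm (skew (2*k) \<kappa> \<eta> as) * (Cp * (K1 * taur \<eta> B1))) summable_on ?S"
        by (rule sum_scale(1)[OF s, where c="Cp*K1"]) (simp add: mult_ac)
    qed simp
    have F2: "(\<Sum>\<^sub>\<infinity>\<eta>\<in>?S. \<Sum>\<^sub>\<infinity>\<zeta>\<in>?S. skew (2*k) \<kappa> \<eta> as * skew1 \<zeta> \<eta> x * skew1 \<zeta> \<pi> y) =
              (\<Sum>\<^sub>\<infinity>\<zeta>\<in>?S. \<Sum>\<^sub>\<infinity>\<eta>\<in>?S. skew (2*k) \<kappa> \<eta> as * skew1 \<zeta> \<eta> x * skew1 \<zeta> \<pi> y)"
    proof (rule fubini_bound2[where P="\<lambda>\<eta>. norm (skew (2*k) \<kappa> \<eta> as)"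
          and Q="\<lambda>\<eta> \<zeta>. sk1r \<zeta> \<eta> rx * (Cp' * taur \<zeta> ry)" and W="\<lambda>\<eta>. Cp' * (K1 * taur \<eta> B2)"])
      fix \<eta> \<zeta> assume \<eta>: "\<eta> \<in> ?S" and \<zeta>: "\<zeta> \<in> ?S"
      have b: "sk1r \<zeta> \<pi> (norm y) \<le> Cp' * taur \<zeta> ry" using sy[of \<zeta> \<pi>] Cp' \<zeta> by force
      have "sk1r \<zeta> \<eta> (norm x) * sk1r \<zeta> \<pi> (norm y) \<le> sk1r \<zeta> \<eta> rx * (Cp' * taur \<zeta> ry)"
        by (rule nb3[OF sk1r_nonneg sx sk1r_nonneg b sk1r_nonneg]) (use rx in auto)
      then show "norm (skew (2*k) \<kappa> \<eta> as * skew1 \<zeta> \<eta> x * skew1 \<zeta> \<pi> y) \<le>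
          norm (skew (2*k) \<kappa> \<eta> as) * (sk1r \<zeta> \<eta> rx * (Cp' * taur \<zeta> ry))"
        unfolding norm_mult norm_skew1 mult.assoc by (rule mult_left_mono) simp
    next
      fix \<eta> assume \<eta>: "\<eta> \<in> ?S"
      have m: "(\<lambda>\<zeta>. sk1r \<zeta> \<eta> rx * taur \<zeta> ry) summable_on ?S \<and>
         (\<Sum>\<^sub>\<infinity>\<zeta>\<in>?S. sk1r \<zeta> \<eta> rx * taur \<zeta> ry) \<le> K1 * taur \<eta> B2"
        using M2[OF \<eta> _ _ th c2] rx ry by (simp add: K1_def B2_def)
      have e: "sk1r \<zeta> \<eta> rx * (Cp' * taur \<zeta> ry) = Cp' * (sk1r \<zeta> \<eta> rx * taur \<zeta> ry)" for \<zeta> by (simp add: mult_ac)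
      note ss = sum_scale[where f="\<lambda>\<zeta>. sk1r \<zeta> \<eta> rx * taur \<zeta> ry" and c=Cp', OF conjunct1[OF m] e]
      show "(\<lambda>\<zeta>. sk1r \<zeta> \<eta> rx * (Cp' * taur \<zeta> ry)) summable_on ?S" by (rule ss(1))
      show "(\<Sum>\<^sub>\<infinity>\<zeta>\<in>?S. sk1r \<zeta> \<eta> rx * (Cp' * taur \<zeta> ry)) \<le> Cp' * (K1 * taur \<eta> B2)"
        unfolding ss(2) by (rule mult_left_mono) (use m Cp'0 in auto)
    next
      have s: "(\<lambda>\<eta>. norm (skew (2*k) \<kappa> \<eta> as) * taur \<eta> B2) summable_on ?S" using CD2 \<kappa> by blast
      show "(\<lambda>\<eta>. norm (skew (2*k) \<kappa> \<eta> as) * (Cp' * (K1 * taur \<eta> B2))) summable_on ?S"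
        by (rule sum_scale(1)[OF s, where c="Cp'*K1"]) (simp add: mult_ac)
    qed simp
    have F3: "(\<Sum>\<^sub>\<infinity>\<zeta>\<in>?S. \<Sum>\<^sub>\<infinity>\<mu>\<in>?S. skew1 \<mu> \<kappa> x * skew (2*k) \<mu> \<zeta> as * skew1 \<zeta> \<pi> y) =
              (\<Sum>\<^sub>\<infinity>\<mu>\<in>?S. \<Sum>\<^sub>\<infinity>\<zeta>\<in>?S. skew1 \<mu> \<kappa> x * skew (2*k) \<mu> \<zeta> as * skew1 \<zeta> \<pi> y)"
    proof (rule fubini_bound2[where P="\<lambda>\<zeta>. sk1r \<zeta> \<pi> ry"
          and Q="\<lambda>\<zeta> \<mu>. norm (skew (2*k) \<mu> \<zeta> as) * (Ck * taur \<mu> rx)" and W="\<lambda>\<zeta>. Ck * (CU * taur \<zeta> Fx)"])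
      fix \<zeta> \<mu> assume \<zeta>: "\<zeta> \<in> ?S" and \<mu>: "\<mu> \<in> ?S"
      have b: "sk1r \<mu> \<kappa> (norm x) \<le> Ck * taur \<mu> rx" using sx[of \<mu> \<kappa>] Ck \<mu> by force
      have "sk1r \<mu> \<kappa> (norm x) * (norm (skew (2*k) \<mu> \<zeta> as) * sk1r \<zeta> \<pi> (norm y)) \<le>
            (Ck * taur \<mu> rx) * (norm (skew (2*k) \<mu> \<zeta> as) * sk1r \<zeta> \<pi> ry)"
        by (rule nb3[OF sk1r_nonneg b]) (use sy rx ry Ck0 \<mu> in \<open>auto intro!: mult_left_mono mult_nonneg_nonneg sk1r_nonneg taur_nonneg\<close>)
      then show "norm (skew1 \<mu> \<kappa> x * skew (2*k) \<mu> \<zeta> as * skew1 \<zeta> \<pi> y) \<le>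
          sk1r \<zeta> \<pi> ry * (norm (skew (2*k) \<mu> \<zeta> as) * (Ck * taur \<mu> rx))"
        unfolding norm_mult norm_skew1 by (simp add: mult_ac)
    next
      fix \<zeta> assume \<zeta>: "\<zeta> \<in> ?S"
      have m: "(\<lambda>\<mu>. norm (skew (2*k) \<mu> \<zeta> as) * taur \<mu> rx) summable_on ?S"
        "(\<Sum>\<^sub>\<infinity>\<mu>\<in>?S. norm (skew (2*k) \<mu> \<zeta> as) * taur \<mu> rx) \<le> CU * taur \<zeta> Fx"
        using CU \<zeta> by (auto simp: Fx_def)
      have e: "norm (skew (2*k) \<mu> \<zeta> as) * (Ck * taur \<mu> rx) = Ck * (norm (skew (2*k) \<mu> \<zeta> as) * taur \<mu> rx)" for \<mu>
        by (simp add: mult_ac)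
      note ss = sum_scale[where f="\<lambda>\<mu>. norm (skew (2*k) \<mu> \<zeta> as) * taur \<mu> rx" and c=Ck, OF m(1) e]
      show "(\<lambda>\<mu>. norm (skew (2*k) \<mu> \<zeta> as) * (Ck * taur \<mu> rx)) summable_on ?S" by (rule ss(1))
      show "(\<Sum>\<^sub>\<infinity>\<mu>\<in>?S. norm (skew (2*k) \<mu> \<zeta> as) * (Ck * taur \<mu> rx)) \<le> Ck * (CU * taur \<zeta> Fx)"
        unfolding ss(2) by (rule mult_left_mono[OF m(2) Ck0])
    next
      fix \<zeta> assume "\<zeta> \<in> ?S" then show "0 \<le> sk1r \<zeta> \<pi> ry" using ry by (simp add: sk1r_nonneg)
    next
      have m: "(\<lambda>\<zeta>. sk1r \<zeta> \<pi> ry * taur \<zeta> (max Fx (\<theta>*ry))) summable_on ?S \<or> True" by simp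
      have m2: "(\<lambda>\<zeta>. sk1r \<zeta> \<pi> ry * taur \<zeta> Fx) summable_on ?S"
        using M2[OF \<pi> _ Fx0 th cF] ry by simp
      show "(\<lambda>\<zeta>. sk1r \<zeta> \<pi> ry * (Ck * (CU * taur \<zeta> Fx))) summable_on ?S"
        by (rule sum_scale(1)[OF m2, where c="Ck*CU"]) (simp add: mult_ac)
    qed
    have "(\<Sum>\<^sub>\<infinity>\<nu>\<in>?S. skew (2*k) \<kappa> \<nu> (as@[y]) * skew1 \<pi> \<nu> x) =
          (\<Sum>\<^sub>\<infinity>\<nu>\<in>?S. \<Sum>\<^sub>\<infinity>\<eta>\<in>?S. skew (2*k) \<kappa> \<eta> as * skew1 \<eta> \<nu> y * skew1 \<pi> \<nu> x)"
      by (simp add: skew_snoc infsum_cmult_left')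
    also have "\<dots> = (\<Sum>\<^sub>\<infinity>\<eta>\<in>?S. \<Sum>\<^sub>\<infinity>\<nu>\<in>?S. skew (2*k) \<kappa> \<eta> as * skew1 \<eta> \<nu> y * skew1 \<pi> \<nu> x)"
      by (rule F1[symmetric])
    also have "\<dots> = (\<Sum>\<^sub>\<infinity>\<eta>\<in>?S. skew (2*k) \<kappa> \<eta> as * (\<Sum>\<^sub>\<infinity>\<nu>\<in>?S. skew1 \<eta> \<nu> y * skew1 \<pi> \<nu> x))"
      by (simp add: infsum_cmult_right' mult.assoc)
    also have "\<dots> = (\<Sum>\<^sub>\<infinity>\<eta>\<in>?S. skew (2*k) \<kappa> \<eta> as * (\<Sum>\<^sub>\<infinity>\<zeta>\<in>?S. skew1 \<zeta> \<eta> x * skew1 \<zeta> \<pi> y))"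
      by (rule infsum_cong) (simp add: K1[OF k _ \<pi>])
    also have "\<dots> = (\<Sum>\<^sub>\<infinity>\<eta>\<in>?S. \<Sum>\<^sub>\<infinity>\<zeta>\<in>?S. skew (2*k) \<kappa> \<eta> as * skew1 \<zeta> \<eta> x * skew1 \<zeta> \<pi> y)"
      by (simp add: infsum_cmult_right' mult.assoc)
    also have "\<dots> = (\<Sum>\<^sub>\<infinity>\<zeta>\<in>?S. \<Sum>\<^sub>\<infinity>\<eta>\<in>?S. skew (2*k) \<kappa> \<eta> as * skew1 \<zeta> \<eta> x * skew1 \<zeta> \<pi> y)"
      by (rule F2)
    also have "\<dots> = (\<Sum>\<^sub>\<infinity>\<zeta>\<in>?S. (\<Sum>\<^sub>\<infinity>\<eta>\<in>?S. skew (2*k) \<kappa> \<eta> as * skew1 \<zeta> \<eta> x) * skew1 \<zeta> \<pi> y)"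
      by (simp add: infsum_cmult_left')
    also have "\<dots> = (\<Sum>\<^sub>\<infinity>\<zeta>\<in>?S. (\<Sum>\<^sub>\<infinity>\<mu>\<in>?S. skew1 \<mu> \<kappa> x * skew (2*k) \<mu> \<zeta> as) * skew1 \<zeta> \<pi> y)"
      by (rule infsum_cong) (use IH \<kappa> in simp)
    also have "\<dots> = (\<Sum>\<^sub>\<infinity>\<zeta>\<in>?S. \<Sum>\<^sub>\<infinity>\<mu>\<in>?S. skew1 \<mu> \<kappa> x * skew (2*k) \<mu> \<zeta> as * skew1 \<zeta> \<pi> y)"
      by (simp add: infsum_cmult_left')
    also have "\<dots> = (\<Sum>\<^sub>\<infinity>\<mu>\<in>?S. \<Sum>\<^sub>\<infinity>\<zeta>\<in>?S. skew1 \<mu> \<kappa> x * skew (2*k) \<mu> \<zeta> as * skew1 \<zeta> \<pi> y)"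
      by (rule F3)
    also have "\<dots> = (\<Sum>\<^sub>\<infinity>\<mu>\<in>?S. skew1 \<mu> \<kappa> x * skew (2*k) \<mu> \<pi> (as@[y]))"
      by (simp add: skew_snoc infsum_cmult_right' mult.assoc)
    finally show "(\<Sum>\<^sub>\<infinity>\<nu>\<in>?S. skew (2*k) \<kappa> \<nu> (as@[y]) * skew1 \<pi> \<nu> x) =
          (\<Sum>\<^sub>\<infinity>\<mu>\<in>?S. skew1 \<mu> \<kappa> x * skew (2*k) \<mu> \<pi> (as@[y]))" .
  qed
qed



lemma ev_lt1:
  fixes u v :: real
  assumes "u * v < 1"
  shows "eventually (\<lambda>\<delta>. (1+\<delta>)*(1+\<delta>)*(u+\<delta>)*(v+\<delta>) < 1) (at_right 0)"
proof -
  have "filterlim (\<lambda>\<delta>. (1+\<delta>)*(1+\<delta>)*(u+\<delta>)*(v+\<delta>)) (nhds ((1+0)*(1+0)*(u+0) * (v+0))) (at_right (0::real))"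
    by (intro tendsto_intros)
  then have "filterlim (\<lambda>\<delta>. (1+\<delta>)*(1+\<delta>)*(u+\<delta>)*(v+\<delta>)) (nhds (u * v)) (at_right (0::real))" by simp
  then show ?thesis using assms by (rule order_tendstoD(2))
qed

lemma params:
  fixes a :: "complex list" and c :: complex
  assumes pa: "\<And>i j. i < j \<Longrightarrow> j < length a \<Longrightarrow> norm (a!i * a!j) < 1"
    and pc: "\<And>i. i < length a \<Longrightarrow> norm (a!i * c) < 1"
  shows "\<exists>\<theta> R rs. 1 < \<theta> \<and> 0 < R \<and> norm c \<le> R \<and> good \<theta> R a rs"
proof -
  let ?I = "{..<length a}"
  have e1: "eventually (\<lambda>\<delta>. \<forall>i\<in>?I. (1+\<delta>)*(1+\<delta>)*(norm (a!i)+\<delta>)*(norm c+\<delta>) < 1) (at_right 0)"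
  proof (rule eventually_ball_finite)
    show "\<forall>i\<in>?I. eventually (\<lambda>\<delta>. (1+\<delta>)*(1+\<delta>)*(norm (a!i)+\<delta>)*(norm c+\<delta>) < 1) (at_right 0)"
    proof
      fix i assume "i \<in> ?I"
      then have "norm (a!i) * norm c < 1" using pc by (simp add: norm_mult)
      then show "eventually (\<lambda>\<delta>. (1+\<delta>)*(1+\<delta>)*(norm (a!i)+\<delta>)*(norm c+\<delta>) < 1) (at_right 0)"
        by (rule ev_lt1)
    qed
  qed simp
  have e2: "eventually (\<lambda>\<delta>. \<forall>p\<in>?I \<times> ?I. fst p \<noteq> snd p \<longrightarrow>
      (1+\<delta>)*(1+\<delta>)*(norm (a!fst p)+\<delta>)*(norm (a!snd p)+\<delta>) < 1) (at_right 0)"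
  proof (rule eventually_ball_finite)
    show "\<forall>p\<in>?I \<times> ?I. eventually (\<lambda>\<delta>. fst p \<noteq> snd p \<longrightarrow>
      (1+\<delta>)*(1+\<delta>)*(norm (a!fst p)+\<delta>)*(norm (a!snd p)+\<delta>) < 1) (at_right 0)"
    proof
      fix p assume p: "p \<in> ?I \<times> ?I"
      show "eventually (\<lambda>\<delta>. fst p \<noteq> snd p \<longrightarrow>
        (1+\<delta>)*(1+\<delta>)*(norm (a!fst p)+\<delta>)*(norm (a!snd p)+\<delta>) < 1) (at_right 0)"
      proof (cases "fst p = snd p")
        case True then show ?thesis by simp
      next
        case False
        have "norm (a!fst p) * norm (a!snd p) < 1"
        proof (cases "fst p < snd p")
          case True then show ?thesis using pa[of "fst p" "snd p"] p by (auto simp: norm_mult)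
        next
          case False
          then have "snd p < fst p" using \<open>fst p \<noteq> snd p\<close> by simp
          then show ?thesis using pa[of "snd p" "fst p"] p by (auto simp: norm_mult mult.commute)
        qed
        then have "eventually (\<lambda>\<delta>. (1+\<delta>)*(1+\<delta>)*(norm (a!fst p)+\<delta>)*(norm (a!snd p)+\<delta>) < 1) (at_right 0)"
          by (rule ev_lt1)
        then show ?thesis by (rule eventually_mono) simp
      qed
    qed
  qed simp
  have "eventually (\<lambda>\<delta>::real. 0 < \<delta>) (at_right 0)" by (rule eventually_at_right_less)
  then have "eventually (\<lambda>\<delta>. 0 < \<delta> \<and>
      (\<forall>i\<in>?I. (1+\<delta>)*(1+\<delta>)*(norm (a!i)+\<delta>)*(norm c+\<delta>) < 1) \<and>
      (\<forall>p\<in>?I \<times> ?I. fst p \<noteq> snd p \<longrightarrow> (1+\<delta>)*(1+\<delta>)*(norm (a!fst p)+\<delta>)*(norm (a!snd p)+\<delta>) < 1))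
      (at_right 0)"
    using e1 e2 by (intro eventually_conj)
  then obtain \<delta> :: real where d0: "0 < \<delta>"
    and d1: "\<forall>i\<in>?I. (1+\<delta>)*(1+\<delta>)*(norm (a!i)+\<delta>)*(norm c+\<delta>) < 1"
    and d2: "\<forall>p\<in>?I \<times> ?I. fst p \<noteq> snd p \<longrightarrow> (1+\<delta>)*(1+\<delta>)*(norm (a!fst p)+\<delta>)*(norm (a!snd p)+\<delta>) < 1"
    using eventually_happens'[OF trivial_limit_at_right_real] by blast
  define rs where "rs = map (\<lambda>z. norm z + \<delta>) a"
  have "good (1+\<delta>) (norm c + \<delta>) a rs"
    unfolding good_def
  proof (intro conjI allI impI)
    show "length rs = length a" by (simp add: rs_def)
    fix i assume i: "i < length a"
    show "norm (a!i) \<le> rs!i" "0 < rs!i" using i d0 by (simp_all add: rs_def add_nonneg_pos)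
    have "(1+\<delta>)*(norm (a!i)+\<delta>)*(norm c+\<delta>) \<le> (1+\<delta>)*(1+\<delta>)*(norm (a!i)+\<delta>)*(norm c+\<delta>)"
      using d0 by (simp add: mult_right_mono)
    also have "\<dots> < 1" using d1 i by simp
    finally show "(1+\<delta>)*rs!i*(norm c+\<delta>) \<le> 1" using i by (simp add: rs_def)
    fix j assume j: "j < length a" and ij: "i \<noteq> j"
    show "(1+\<delta>)*(1+\<delta>)*rs!i*rs!j \<le> 1" using d2 i j ij by (force simp: rs_def)
  qed
  then show ?thesis using d0
    by (rule_tac exI[of _ "1+\<delta>"], rule_tac exI[of _ "norm c + \<delta>"], rule_tac exI[of _ rs])
      (auto intro: add_nonneg_pos)
qed


lemma Emain:
  fixes c :: complex
  assumes k: "1 \<le> k" and th: "1 < \<theta>" and R: "0 < R" and cR: "norm c \<le> R"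
    and g: "good \<theta> R as rs"
  shows "\<forall>\<kappa>\<in>Sign (2*k). (\<Sum>\<^sub>\<infinity>l\<in>Sign (2*k). tau l c * skew (2*k) \<kappa> l as) =
                          (\<Sum>\<^sub>\<infinity>p\<in>Sign (2*k). tau p c * skew (2*k) p \<kappa> as)"
  using g
proof (induction as arbitrary: rs rule: rev_induct)
  case Nil
  show ?case
  proof
    fix \<kappa> assume \<kappa>: "\<kappa> \<in> Sign (2*k)"
    have "(\<Sum>\<^sub>\<infinity>l\<in>Sign (2*k). tau l c * skew (2*k) \<kappa> l []) = (\<Sum>\<^sub>\<infinity>l\<in>Sign (2*k). if l = \<kappa> then tau \<kappa> c else 0)"
      by (rule infsum_cong) (auto simp: skew_Nil)
    also have "\<dots> = tau \<kappa> c" by (rule infsumI[OF has_sum_single[OF \<kappa>]])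
    also have "\<dots> = (\<Sum>\<^sub>\<infinity>p\<in>Sign (2*k). if p = \<kappa> then tau \<kappa> c else 0)"
      by (rule infsumI[OF has_sum_single[OF \<kappa>], symmetric])
    also have "\<dots> = (\<Sum>\<^sub>\<infinity>p\<in>Sign (2*k). tau p c * skew (2*k) p \<kappa> [])"
      by (rule infsum_cong) (auto simp: skew_Nil)
    finally show "(\<Sum>\<^sub>\<infinity>l\<in>Sign (2*k). tau l c * skew (2*k) \<kappa> l []) = (\<Sum>\<^sub>\<infinity>p\<in>Sign (2*k). tau p c * skew (2*k) p \<kappa> [])" .
  qed
next
  case (snoc x as)
  from snoc.prems obtain rs0 r where rs: "rs = rs0@[r]" and g0: "good \<theta> R as rs0"
    and xr: "norm x \<le> r" and r0: "0 < r" and rR: "\<theta>*r*R \<le> 1"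
    and pr: "\<forall>r'\<in>set rs0. \<theta>*\<theta>*r'*r \<le> 1"
    by (rule good_snoc)
  note IH = snoc.IH[OF g0]
  let ?S = "Sign (2*k)"
  define B1 where "B1 = max R (\<theta>*r)"
  have gB1: "good \<theta> B1 as rs0" unfolding B1_def by (rule good_max[OF g0 pr]) (use th in simp)
  have gK: "good \<theta> (\<theta>*r) as rs0" by (rule good_mono[OF gB1]) (use th r0 in \<open>auto simp: B1_def\<close>)
  note KCx = KC[OF k th r0 xr gK]
  have B1p: "0 < B1" using R by (simp add: B1_def)
  obtain CD where CD: "\<forall>\<kappa>\<in>?S. (\<lambda>l. norm (skew (2*k) \<kappa> l as) * taur l B1) summable_on ?S \<and>
     (\<Sum>\<^sub>\<infinity>l\<in>?S. norm (skew (2*k) \<kappa> l as) * taur l B1) \<le> CD * taur \<kappa> (Fw \<theta> rs0 B1)"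
    using M3D[OF th B1p gB1] by blast
  obtain CU where CU0: "CU \<ge> 0" and CU: "\<forall>\<kappa>\<in>?S. (\<lambda>l. norm (skew (2*k) l \<kappa> as) * taur l R) summable_on ?S \<and>
     (\<Sum>\<^sub>\<infinity>l\<in>?S. norm (skew (2*k) l \<kappa> as) * taur l R) \<le> CU * taur \<kappa> (Fw \<theta> rs0 R)"
    using M3U[OF th R g0] by blast
  obtain CD0 where CD0: "\<forall>\<kappa>\<in>?S. (\<lambda>l. norm (skew (2*k) \<kappa> l as) * taur l R) summable_on ?S \<and>
     (\<Sum>\<^sub>\<infinity>l\<in>?S. norm (skew (2*k) \<kappa> l as) * taur l R) \<le> CD0 * taur \<kappa> (Fw \<theta> rs0 R)"
    using M3D[OF th R g0] by blast
  define FR where "FR = Fw \<theta> rs0 R"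
  have FR0: "0 \<le> FR" using Fw_ge[of R \<theta> rs0] R by (simp add: FR_def)
  have cF: "\<theta>*r*FR \<le> 1" unfolding FR_def by (rule good_Fw[OF g0 r0 _ rR pr]) (use th in simp)
  define K1 where "K1 = (1/(1-1/\<theta>))^(2*k)"
  have K1nn: "0 \<le> K1" unfolding K1_def by (rule K1_nonneg[OF th])
  have tc: "norm (tau l c) \<le> taur l R" if "l \<in> ?S" for l
    unfolding norm_tau by (rule taur_mono[OF that]) (use cR in auto)
  have sx: "sk1r a b (norm x) \<le> sk1r a b r" for a b by (rule sk1r_mono) (use xr in auto)
  show ?case
  proof
    fix \<kappa> assume \<kappa>: "\<kappa> \<in> ?S"
    have E1: "(\<Sum>\<^sub>\<infinity>\<nu>\<in>?S. \<Sum>\<^sub>\<infinity>l\<in>?S. tau l c * (skew (2*k) \<kappa> \<nu> as * skew1 \<nu> l x)) =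
              (\<Sum>\<^sub>\<infinity>l\<in>?S. \<Sum>\<^sub>\<infinity>\<nu>\<in>?S. tau l c * (skew (2*k) \<kappa> \<nu> as * skew1 \<nu> l x))"
    proof (rule fubini_bound2[where P="\<lambda>\<nu>. norm (skew (2*k) \<kappa> \<nu> as)"
          and Q="\<lambda>\<nu> l. sk1r \<nu> l r * taur l R" and W="\<lambda>\<nu>. K1 * taur \<nu> B1"])
      fix \<nu> l assume \<nu>: "\<nu> \<in> ?S" and l: "l \<in> ?S"
      have "norm (tau l c) * sk1r \<nu> l (norm x) \<le> taur l R * sk1r \<nu> l r"
        by (rule mult_mono[OF tc[OF l] sx]) (use R l in \<open>auto intro: taur_nonneg sk1r_nonneg\<close>)
      then show "norm (tau l c * (skew (2*k) \<kappa> \<nu> as * skew1 \<nu> l x)) \<le>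
                 norm (skew (2*k) \<kappa> \<nu> as) * (sk1r \<nu> l r * taur l R)"
        unfolding norm_mult norm_skew1
      proof -
        assume h: "norm (tau l c) * sk1r \<nu> l (norm x) \<le> taur l R * sk1r \<nu> l r"
        have "norm (skew (2*k) \<kappa> \<nu> as) * (norm (tau l c) * sk1r \<nu> l (norm x)) \<le>
              norm (skew (2*k) \<kappa> \<nu> as) * (taur l R * sk1r \<nu> l r)"
          by (rule mult_left_mono[OF h]) simp
        then show "norm (tau l c) * (norm (skew (2*k) \<kappa> \<nu> as) * sk1r \<nu> l (norm x)) \<le>
                 norm (skew (2*k) \<kappa> \<nu> as) * (sk1r \<nu> l r * taur l R)"
          by (simp add: mult_ac)
      qed
    next
      fix \<nu> assume \<nu>: "\<nu> \<in> ?S"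
      have m: "(\<lambda>l. sk1r \<nu> l r * taur l R) summable_on ?S \<and>
         (\<Sum>\<^sub>\<infinity>l\<in>?S. sk1r \<nu> l r * taur l R) \<le> K1 * taur \<nu> B1"
        using M1[OF \<nu> _ _ th rR] r0 R by (simp add: K1_def B1_def)
      show "(\<lambda>l. sk1r \<nu> l r * taur l R) summable_on ?S" using m by simp
      show "(\<Sum>\<^sub>\<infinity>l\<in>?S. sk1r \<nu> l r * taur l R) \<le> K1 * taur \<nu> B1" using m by simp
    next
      have s: "(\<lambda>\<nu>. norm (skew (2*k) \<kappa> \<nu> as) * taur \<nu> B1) summable_on ?S" using CD \<kappa> by blast
      show "(\<lambda>\<nu>. norm (skew (2*k) \<kappa> \<nu> as) * (K1 * taur \<nu> B1)) summable_on ?S"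
        by (rule sum_scale(1)[OF s, where c=K1]) (simp add: mult_ac)
    qed simp
    have E2: "(\<Sum>\<^sub>\<infinity>\<nu>\<in>?S. \<Sum>\<^sub>\<infinity>p\<in>?S. skew (2*k) \<kappa> \<nu> as * (skew1 p \<nu> x * tau p c)) =
              (\<Sum>\<^sub>\<infinity>p\<in>?S. \<Sum>\<^sub>\<infinity>\<nu>\<in>?S. skew (2*k) \<kappa> \<nu> as * (skew1 p \<nu> x * tau p c))"
    proof (rule fubini_bound2[where P="\<lambda>\<nu>. norm (skew (2*k) \<kappa> \<nu> as)"
          and Q="\<lambda>\<nu> p. sk1r p \<nu> r * taur p R" and W="\<lambda>\<nu>. K1 * taur \<nu> B1"])
      fix \<nu> p assume \<nu>: "\<nu> \<in> ?S" and p: "p \<in> ?S"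
      have "sk1r p \<nu> (norm x) * norm (tau p c) \<le> sk1r p \<nu> r * taur p R"
        by (rule mult_mono[OF sx tc[OF p]]) (use r0 in \<open>auto intro: sk1r_nonneg\<close>)
      then show "norm (skew (2*k) \<kappa> \<nu> as * (skew1 p \<nu> x * tau p c)) \<le>
                 norm (skew (2*k) \<kappa> \<nu> as) * (sk1r p \<nu> r * taur p R)"
        unfolding norm_mult norm_skew1 by (rule mult_left_mono) simp
    next
      fix \<nu> assume \<nu>: "\<nu> \<in> ?S"
      have m: "(\<lambda>p. sk1r p \<nu> r * taur p R) summable_on ?S \<and>
         (\<Sum>\<^sub>\<infinity>p\<in>?S. sk1r p \<nu> r * taur p R) \<le> K1 * taur \<nu> B1"
        using M2[OF \<nu> _ _ th rR] r0 R by (simp add: K1_def B1_def)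
      show "(\<lambda>p. sk1r p \<nu> r * taur p R) summable_on ?S" using m by simp
      show "(\<Sum>\<^sub>\<infinity>p\<in>?S. sk1r p \<nu> r * taur p R) \<le> K1 * taur \<nu> B1" using m by simp
    next
      have s: "(\<lambda>\<nu>. norm (skew (2*k) \<kappa> \<nu> as) * taur \<nu> B1) summable_on ?S" using CD \<kappa> by blast
      show "(\<lambda>\<nu>. norm (skew (2*k) \<kappa> \<nu> as) * (K1 * taur \<nu> B1)) summable_on ?S"
        by (rule sum_scale(1)[OF s, where c=K1]) (simp add: mult_ac)
    qed simp
    have m2: "(\<lambda>\<mu>. sk1r \<mu> \<kappa> r * taur \<mu> FR) summable_on ?S"
      using M2[OF \<kappa> _ FR0 th cF] r0 by simp
    have Ws: "(\<lambda>\<mu>. sk1r \<mu> \<kappa> r * (CU * taur \<mu> FR)) summable_on ?S"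
      by (rule sum_scale(1)[OF m2, where c=CU]) (simp add: mult_ac)
    have Qs: "(\<lambda>p. norm (skew (2*k) p \<mu> as) * taur p R) summable_on ?S"
      "(\<Sum>\<^sub>\<infinity>p\<in>?S. norm (skew (2*k) p \<mu> as) * taur p R) \<le> CU * taur \<mu> FR" if "\<mu> \<in> ?S" for \<mu>
      using CU that by (auto simp: FR_def)
    have WsD: "(\<lambda>\<mu>. sk1r \<mu> \<kappa> r * (CD0 * taur \<mu> FR)) summable_on ?S"
      by (rule sum_scale(1)[OF m2, where c=CD0]) (simp add: mult_ac)
    have QsD: "(\<lambda>p. norm (skew (2*k) \<mu> p as) * taur p R) summable_on ?S"
      "(\<Sum>\<^sub>\<infinity>p\<in>?S. norm (skew (2*k) \<mu> p as) * taur p R) \<le> CD0 * taur \<mu> FR" if "\<mu> \<in> ?S" for \<mu>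
      using CD0 that by (auto simp: FR_def)
    have E3: "(\<Sum>\<^sub>\<infinity>\<mu>\<in>?S. \<Sum>\<^sub>\<infinity>p\<in>?S. tau p c * (skew1 \<mu> \<kappa> x * skew (2*k) \<mu> p as)) =
              (\<Sum>\<^sub>\<infinity>p\<in>?S. \<Sum>\<^sub>\<infinity>\<mu>\<in>?S. tau p c * (skew1 \<mu> \<kappa> x * skew (2*k) \<mu> p as))"
    proof (rule fubini_bound2[where P="\<lambda>\<mu>. sk1r \<mu> \<kappa> r"
          and Q="\<lambda>\<mu> p. norm (skew (2*k) \<mu> p as) * taur p R" and W="\<lambda>\<mu>. CD0 * taur \<mu> FR"])
      fix \<mu> p assume \<mu>: "\<mu> \<in> ?S" and p: "p \<in> ?S"
      have "norm (tau p c) * (sk1r \<mu> \<kappa> (norm x) * norm (skew (2*k) \<mu> p as)) \<le>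
            taur p R * (sk1r \<mu> \<kappa> r * norm (skew (2*k) \<mu> p as))"
        by (rule mult_mono[OF tc[OF p] mult_right_mono[OF sx]]) (use R p r0 in \<open>auto intro!: taur_nonneg mult_nonneg_nonneg sk1r_nonneg\<close>)
      then show "norm (tau p c * (skew1 \<mu> \<kappa> x * skew (2*k) \<mu> p as)) \<le>
                 sk1r \<mu> \<kappa> r * (norm (skew (2*k) \<mu> p as) * taur p R)"
        unfolding norm_mult norm_skew1 by (simp add: mult_ac)
    next
      fix \<mu> assume "\<mu> \<in> ?S" then show "0 \<le> sk1r \<mu> \<kappa> r" using r0 by (simp add: sk1r_nonneg)
    next
      fix \<mu> assume \<mu>: "\<mu> \<in> ?S"
      show "(\<lambda>p. norm (skew (2*k) \<mu> p as) * taur p R) summable_on ?S" by (rule QsD(1)[OF \<mu>])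
      show "(\<Sum>\<^sub>\<infinity>p\<in>?S. norm (skew (2*k) \<mu> p as) * taur p R) \<le> CD0 * taur \<mu> FR" by (rule QsD(2)[OF \<mu>])
    next
      show "(\<lambda>\<mu>. sk1r \<mu> \<kappa> r * (CD0 * taur \<mu> FR)) summable_on ?S" by (rule WsD)
    qed
    have E4: "(\<Sum>\<^sub>\<infinity>\<mu>\<in>?S. \<Sum>\<^sub>\<infinity>q\<in>?S. skew1 \<mu> \<kappa> x * (tau q c * skew (2*k) q \<mu> as)) =
              (\<Sum>\<^sub>\<infinity>q\<in>?S. \<Sum>\<^sub>\<infinity>\<mu>\<in>?S. skew1 \<mu> \<kappa> x * (tau q c * skew (2*k) q \<mu> as))"
    proof (rule fubini_bound2[where P="\<lambda>\<mu>. sk1r \<mu> \<kappa> r"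
          and Q="\<lambda>\<mu> q. norm (skew (2*k) q \<mu> as) * taur q R" and W="\<lambda>\<mu>. CU * taur \<mu> FR"])
      fix \<mu> q assume \<mu>: "\<mu> \<in> ?S" and q: "q \<in> ?S"
      have "sk1r \<mu> \<kappa> (norm x) * (norm (tau q c) * norm (skew (2*k) q \<mu> as)) \<le>
            sk1r \<mu> \<kappa> r * (taur q R * norm (skew (2*k) q \<mu> as))"
        by (rule mult_mono[OF sx mult_right_mono[OF tc[OF q]]]) (use R q r0 in \<open>auto intro!: taur_nonneg mult_nonneg_nonneg sk1r_nonneg\<close>)
      then show "norm (skew1 \<mu> \<kappa> x * (tau q c * skew (2*k) q \<mu> as)) \<le>
                 sk1r \<mu> \<kappa> r * (norm (skew (2*k) q \<mu> as) * taur q R)"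
        unfolding norm_mult norm_skew1 by (simp add: mult_ac)
    next
      fix \<mu> assume "\<mu> \<in> ?S" then show "0 \<le> sk1r \<mu> \<kappa> r" using r0 by (simp add: sk1r_nonneg)
    next
      fix \<mu> assume \<mu>: "\<mu> \<in> ?S"
      show "(\<lambda>p. norm (skew (2*k) p \<mu> as) * taur p R) summable_on ?S" by (rule Qs(1)[OF \<mu>])
      show "(\<Sum>\<^sub>\<infinity>p\<in>?S. norm (skew (2*k) p \<mu> as) * taur p R) \<le> CU * taur \<mu> FR" by (rule Qs(2)[OF \<mu>])
    next
      show "(\<lambda>\<mu>. sk1r \<mu> \<kappa> r * (CU * taur \<mu> FR)) summable_on ?S" by (rule Ws)
    qed
    have "(\<Sum>\<^sub>\<infinity>l\<in>?S. tau l c * skew (2*k) \<kappa> l (as@[x])) =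
          (\<Sum>\<^sub>\<infinity>l\<in>?S. \<Sum>\<^sub>\<infinity>\<nu>\<in>?S. tau l c * (skew (2*k) \<kappa> \<nu> as * skew1 \<nu> l x))"
      by (simp add: skew_snoc infsum_cmult_right')
    also have "\<dots> = (\<Sum>\<^sub>\<infinity>\<nu>\<in>?S. \<Sum>\<^sub>\<infinity>l\<in>?S. tau l c * (skew (2*k) \<kappa> \<nu> as * skew1 \<nu> l x))"
      by (rule E1[symmetric])
    also have "\<dots> = (\<Sum>\<^sub>\<infinity>\<nu>\<in>?S. skew (2*k) \<kappa> \<nu> as * (\<Sum>\<^sub>\<infinity>l\<in>?S. skew1 \<nu> l x * tau l c))"
      by (rule infsum_cong) (simp add: infsum_cmult_right'[symmetric] mult_ac)
    also have "\<dots> = (\<Sum>\<^sub>\<infinity>\<nu>\<in>?S. skew (2*k) \<kappa> \<nu> as * (\<Sum>\<^sub>\<infinity>p\<in>?S. skew1 p \<nu> x * tau p c))"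
      by (rule infsum_cong) (simp add: I1[OF k])
    also have "\<dots> = (\<Sum>\<^sub>\<infinity>\<nu>\<in>?S. \<Sum>\<^sub>\<infinity>p\<in>?S. skew (2*k) \<kappa> \<nu> as * (skew1 p \<nu> x * tau p c))"
      by (simp add: infsum_cmult_right')
    also have "\<dots> = (\<Sum>\<^sub>\<infinity>p\<in>?S. \<Sum>\<^sub>\<infinity>\<nu>\<in>?S. skew (2*k) \<kappa> \<nu> as * (skew1 p \<nu> x * tau p c))"
      by (rule E2)
    also have "\<dots> = (\<Sum>\<^sub>\<infinity>p\<in>?S. tau p c * (\<Sum>\<^sub>\<infinity>\<nu>\<in>?S. skew (2*k) \<kappa> \<nu> as * skew1 p \<nu> x))"
      by (rule infsum_cong) (simp add: infsum_cmult_right'[symmetric] mult_ac)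
    also have "\<dots> = (\<Sum>\<^sub>\<infinity>p\<in>?S. tau p c * (\<Sum>\<^sub>\<infinity>\<mu>\<in>?S. skew1 \<mu> \<kappa> x * skew (2*k) \<mu> p as))"
      by (rule infsum_cong) (use KCx \<kappa> in simp)
    also have "\<dots> = (\<Sum>\<^sub>\<infinity>p\<in>?S. \<Sum>\<^sub>\<infinity>\<mu>\<in>?S. tau p c * (skew1 \<mu> \<kappa> x * skew (2*k) \<mu> p as))"
      by (simp add: infsum_cmult_right')
    also have "\<dots> = (\<Sum>\<^sub>\<infinity>\<mu>\<in>?S. \<Sum>\<^sub>\<infinity>p\<in>?S. tau p c * (skew1 \<mu> \<kappa> x * skew (2*k) \<mu> p as))"
      by (rule E3[symmetric])
    also have "\<dots> = (\<Sum>\<^sub>\<infinity>\<mu>\<in>?S. skew1 \<mu> \<kappa> x * (\<Sum>\<^sub>\<infinity>p\<in>?S. tau p c * skew (2*k) \<mu> p as))"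
      by (rule infsum_cong) (simp add: infsum_cmult_right'[symmetric] mult_ac)
    also have "\<dots> = (\<Sum>\<^sub>\<infinity>\<mu>\<in>?S. skew1 \<mu> \<kappa> x * (\<Sum>\<^sub>\<infinity>q\<in>?S. tau q c * skew (2*k) q \<mu> as))"
      by (rule infsum_cong) (use IH in simp)
    also have "\<dots> = (\<Sum>\<^sub>\<infinity>\<mu>\<in>?S. \<Sum>\<^sub>\<infinity>q\<in>?S. skew1 \<mu> \<kappa> x * (tau q c * skew (2*k) q \<mu> as))"
      by (simp add: infsum_cmult_right')
    also have "\<dots> = (\<Sum>\<^sub>\<infinity>q\<in>?S. \<Sum>\<^sub>\<infinity>\<mu>\<in>?S. skew1 \<mu> \<kappa> x * (tau q c * skew (2*k) q \<mu> as))"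
      by (rule E4)
    also have "\<dots> = (\<Sum>\<^sub>\<infinity>q\<in>?S. tau q c * skew (2*k) q \<kappa> (as@[x]))"
      by (rule infsum_cong) (simp add: skew_snoc infsum_cmult_right'[symmetric] mult_ac)
    finally show "(\<Sum>\<^sub>\<infinity>l\<in>?S. tau l c * skew (2*k) \<kappa> l (as@[x])) =
          (\<Sum>\<^sub>\<infinity>q\<in>?S. tau q c * skew (2*k) q \<kappa> (as@[x]))" .
  qed
qed



theorem proposition2p7:
  fixes n :: nat and c :: complex and a :: "complex list" and \<kappa> :: "int list"
  assumes "even n" and "n \<ge> 1"
    and "\<And>i j. i < j \<Longrightarrow> j < length a \<Longrightarrow> norm (a ! i * a ! j) < 1"
    and "\<And>i. i < length a \<Longrightarrow> norm (a ! i * c) < 1"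
    and "\<kappa> \<in> Sign n"
  shows "(\<lambda>l. norm (tau l c * skew n \<kappa> l a)) summable_on Sign n
       \<and> (\<lambda>\<pi>. norm (tau \<pi> c * skew n \<pi> \<kappa> a)) summable_on Sign n
       \<and> (\<Sum>\<^sub>\<infinity> l \<in> Sign n. tau l c * skew n \<kappa> l a)
         = (\<Sum>\<^sub>\<infinity> \<pi> \<in> Sign n. tau \<pi> c * skew n \<pi> \<kappa> a)"
proof -
  obtain k where nk: "n = 2*k" using assms(1) by (auto elim: evenE)
  have k: "1 \<le> k" using assms(2) nk by simp
  have \<kappa>: "\<kappa> \<in> Sign (2*k)" using assms(5) nk by simp
  obtain \<theta> R rs where th: "1 < \<theta>" and R: "0 < R" and cR: "norm c \<le> R" and g: "good \<theta> R a rs"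
    using params[OF assms(3) assms(4)] by blast
  let ?S = "Sign (2*k)"
  have tc: "norm (tau l c) \<le> taur l R" if "l \<in> ?S" for l
    unfolding norm_tau by (rule taur_mono[OF that]) (use cR in auto)
  obtain CD where CD: "\<forall>\<kappa>\<in>?S. (\<lambda>l. norm (skew (2*k) \<kappa> l a) * taur l R) summable_on ?S \<and>
     (\<Sum>\<^sub>\<infinity>l\<in>?S. norm (skew (2*k) \<kappa> l a) * taur l R) \<le> CD * taur \<kappa> (Fw \<theta> rs R)"
    using M3D[OF th R g] by blast
  obtain CU where CU: "\<forall>\<kappa>\<in>?S. (\<lambda>l. norm (skew (2*k) l \<kappa> a) * taur l R) summable_on ?S \<and>
     (\<Sum>\<^sub>\<infinity>l\<in>?S. norm (skew (2*k) l \<kappa> a) * taur l R) \<le> CU * taur \<kappa> (Fw \<theta> rs R)"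
    using M3U[OF th R g] by blast
  have s1: "(\<lambda>l. norm (tau l c * skew (2*k) \<kappa> l a)) summable_on ?S"
  proof (rule summable_on_comparison_test)
    show "(\<lambda>l. norm (skew (2*k) \<kappa> l a) * taur l R) summable_on ?S" using CD \<kappa> by blast
    fix l assume l: "l \<in> ?S"
    show "norm (tau l c * skew (2*k) \<kappa> l a) \<le> norm (skew (2*k) \<kappa> l a) * taur l R"
      unfolding norm_mult using mult_right_mono[OF tc[OF l], of "norm (skew (2*k) \<kappa> l a)"]
      by (simp add: mult.commute)
    show "0 \<le> norm (tau l c * skew (2*k) \<kappa> l a)" by simp
  qed
  have s2: "(\<lambda>l. norm (tau l c * skew (2*k) l \<kappa> a)) summable_on ?S"
  proof (rule summable_on_comparison_test)
    show "(\<lambda>l. norm (skew (2*k) l \<kappa> a) * taur l R) summable_on ?S" using CU \<kappa> by blast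
    fix l assume l: "l \<in> ?S"
    show "norm (tau l c * skew (2*k) l \<kappa> a) \<le> norm (skew (2*k) l \<kappa> a) * taur l R"
      unfolding norm_mult using mult_right_mono[OF tc[OF l], of "norm (skew (2*k) l \<kappa> a)"]
      by (simp add: mult.commute)
    show "0 \<le> norm (tau l c * skew (2*k) l \<kappa> a)" by simp
  qed
  have e: "(\<Sum>\<^sub>\<infinity>l\<in>?S. tau l c * skew (2*k) \<kappa> l a) = (\<Sum>\<^sub>\<infinity>p\<in>?S. tau p c * skew (2*k) p \<kappa> a)"
    using Emain[OF k th R cR g] \<kappa> by blast
  show ?thesis using s1 s2 e nk by simp
qed


end
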